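(* Let $\beta\ge5$ and $\epsilon\in\{1,-1\}$. Let $\Lambda_2$ be the quotient of $[4,8,2^\beta]^+$ by the relations $\sigma_2^2\sigma_1=\sigma_1\sigma_2^2$ and $\sigma_3\sigma_2^2=\sigma_2^2\sigma_3^{1+\epsilon2^{\beta-2}}$. Then $\Lambda_2$ is the automorphism group, with standard generators $\sigma_1,\sigma_2,\sigma_3$, of an atomic chiral $4$-polytope of type $\{4,8,2^\beta\}$.
   Context: $[p,q,r]^+=\langle\sigma_1,\sigma_2,\sigma_3\mid\sigma_1^p=\sigma_2^q=\sigma_3^r=(\sigma_1\sigma_2)^2=(\sigma_2\sigma_3)^2=(\sigma_1\sigma_2\sigma_3)^2=1\rangle$. Standard generators of a chiral polytope with base flag $\Phi$: $\Phi\sigma_i=\Phi^{i(i-1)}$, $\Phi^j$ the flag differing from $\Phi$ only in its $j$-face. Tight: type $\{p,q,r\}$ with exactly $2pqr$ flags. A tight chiral $4$-polytope is atomic if it does not properly cover any tight chiral polytope. *)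

theory Defs
  imports "HOL-Algebra.Algebra"
begin

text \<open>Words over an alphabet of generators; a letter (g, True) stands for g inverse.
  A set R of pairs (l, r) of words encodes the defining relations l = r.\<close>

inductive word_eqv :: "(('g \<times> bool) list \<times> ('g \<times> bool) list) set
    \<Rightarrow> ('g \<times> bool) list \<Rightarrow> ('g \<times> bool) list \<Rightarrow> bool"
  for R where
  refl: "word_eqv R w w"
| sym: "word_eqv R u v \<Longrightarrow> word_eqv R v u"
| trans: "word_eqv R u v \<Longrightarrow> word_eqv R v w \<Longrightarrow> word_eqv R u w"
| cancel: "word_eqv R (u @ [(x, b), (x, \<not> b)] @ v) (u @ v)"
| rel: "(l, r) \<in> R \<Longrightarrow> word_eqv R (u @ l @ v) (u @ r @ v)"

definition word_class :: "(('g \<times> bool) list \<times> ('g \<times> bool) list) set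
    \<Rightarrow> ('g \<times> bool) list \<Rightarrow> ('g \<times> bool) list set" where
  "word_class R w = {v. word_eqv R w v}"

definition pres_group :: "(('g \<times> bool) list \<times> ('g \<times> bool) list) set
    \<Rightarrow> ('g \<times> bool) list set monoid" where
  "pres_group R = \<lparr>carrier = range (word_class R),
     monoid.mult = (\<lambda>A B. word_class R ((SOME w. w \<in> A) @ (SOME w. w \<in> B))),
     one = word_class R []\<rparr>"

definition pres_gen :: "(('g \<times> bool) list \<times> ('g \<times> bool) list) set
    \<Rightarrow> 'g \<Rightarrow> ('g \<times> bool) list set" where
  "pres_gen R g = word_class R [(g, False)]"

definition wpow :: "'g \<Rightarrow> int \<Rightarrow> ('g \<times> bool) list" where
  "wpow g k = (if 0 \<le> k then replicate (nat k) (g, False) else replicate (nat (- k)) (g, True))"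

datatype gen3 = S1 | S2 | S3

text \<open>Relations of [4,8,2^beta]^+ together with the two extra relations defining Lambda_2.\<close>
definition Lambda2_rels :: "nat \<Rightarrow> int \<Rightarrow> ((gen3 \<times> bool) list \<times> (gen3 \<times> bool) list) set" where
  "Lambda2_rels \<beta> \<epsilon> =
    { (wpow S1 4, []),
      (wpow S2 8, []),
      (wpow S3 (2 ^ \<beta>), []),
      (wpow S1 1 @ wpow S2 1 @ wpow S1 1 @ wpow S2 1, []),
      (wpow S2 1 @ wpow S3 1 @ wpow S2 1 @ wpow S3 1, []),
      (wpow S1 1 @ wpow S2 1 @ wpow S3 1 @ wpow S1 1 @ wpow S2 1 @ wpow S3 1, []),
      (wpow S2 2 @ wpow S1 1, wpow S1 1 @ wpow S2 2),
      (wpow S3 1 @ wpow S2 2, wpow S2 2 @ wpow S3 (1 + \<epsilon> * 2 ^ (\<beta> - 2))) }"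

definition Lambda2 :: "nat \<Rightarrow> int \<Rightarrow> (gen3 \<times> bool) list set monoid" where
  "Lambda2 \<beta> \<epsilon> = pres_group (Lambda2_rels \<beta> \<epsilon>)"

section \<open>Rotation groups of chiral 4-polytopes (Schulte--Weiss characterization)\<close>

definition rot_group4 :: "('a, 'b) monoid_scheme \<Rightarrow> 'a \<Rightarrow> 'a \<Rightarrow> 'a \<Rightarrow> bool" where
  "rot_group4 G a b c \<longleftrightarrow>
     group G \<and> a \<in> carrier G \<and> b \<in> carrier G \<and> c \<in> carrier G \<and>
     a \<noteq> \<one>\<^bsub>G\<^esub> \<and> b \<noteq> \<one>\<^bsub>G\<^esub> \<and> c \<noteq> \<one>\<^bsub>G\<^esub> \<and>
     generate G {a, b, c} = carrier G \<and>
     (a \<otimes>\<^bsub>G\<^esub> b) [^]\<^bsub>G\<^esub> (2::nat) = \<one>\<^bsub>G\<^esub> \<and>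
     (b \<otimes>\<^bsub>G\<^esub> c) [^]\<^bsub>G\<^esub> (2::nat) = \<one>\<^bsub>G\<^esub> \<and>
     (a \<otimes>\<^bsub>G\<^esub> b \<otimes>\<^bsub>G\<^esub> c) [^]\<^bsub>G\<^esub> (2::nat) = \<one>\<^bsub>G\<^esub> \<and>
     generate G {a} \<inter> generate G {b} = {\<one>\<^bsub>G\<^esub>} \<and>
     generate G {b} \<inter> generate G {c} = {\<one>\<^bsub>G\<^esub>} \<and>
     generate G {a, b} \<inter> generate G {b, c} = generate G {b}"

text \<open>Chiral: rotation group of a polytope which is not directly regular, i.e. there is no
  group automorphism sending (s1,s2,s3) to (s1^-1, s1^2 s2, s3).\<close>
definition chiral4 :: "('a, 'b) monoid_scheme \<Rightarrow> 'a \<Rightarrow> 'a \<Rightarrow> 'a \<Rightarrow> bool" where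
  "chiral4 G a b c \<longleftrightarrow> rot_group4 G a b c \<and>
     \<not> (\<exists>\<phi>. \<phi> \<in> iso G G \<and> \<phi> a = inv\<^bsub>G\<^esub> a \<and> \<phi> b = a \<otimes>\<^bsub>G\<^esub> a \<otimes>\<^bsub>G\<^esub> b \<and> \<phi> c = c)"

text \<open>Type {p,q,r} with p,q,r the orders of the generators; tight: 2pqr flags, i.e.
  the rotation group has order pqr.\<close>
definition tight_chiral4 :: "('a, 'b) monoid_scheme \<Rightarrow> 'a \<Rightarrow> 'a \<Rightarrow> 'a \<Rightarrow> bool" where
  "tight_chiral4 G a b c \<longleftrightarrow> chiral4 G a b c \<and> finite (carrier G) \<and>
     2 * order G = 2 * (group.ord G a * group.ord G b * group.ord G c)"

text \<open>Atomic: tight, and does not properly cover any tight chiral polytope, i.e. no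
  nontrivial normal subgroup N yields a tight chiral quotient with the induced generators.\<close>
definition atomic_chiral4 :: "('a, 'b) monoid_scheme \<Rightarrow> 'a \<Rightarrow> 'a \<Rightarrow> 'a \<Rightarrow> bool" where
  "atomic_chiral4 G a b c \<longleftrightarrow> tight_chiral4 G a b c \<and>
     \<not> (\<exists>N. N \<lhd> G \<and> N \<noteq> {\<one>\<^bsub>G\<^esub>} \<and>
          tight_chiral4 (G Mod N) (N #>\<^bsub>G\<^esub> a) (N #>\<^bsub>G\<^esub> b) (N #>\<^bsub>G\<^esub> c))"

end

theory Submission
  imports Defs
begin

section \<open>Generic facts on presented groups\<close>

lemma word_eqv_app_left: "word_eqv R u v \<Longrightarrow> word_eqv R (x @ u) (x @ v)"
proof (induction rule: word_eqv.induct)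
  case (cancel u y b v) then show ?case
    using word_eqv.cancel[of R "x @ u" y b v] by simp
next
  case (rel l r u v) then show ?case
    using word_eqv.rel[of l r R "x @ u" v] by simp
next
  case refl then show ?case by (rule word_eqv.refl)
next
  case sym then show ?case by (metis word_eqv.sym)
next
  case trans then show ?case by (metis word_eqv.trans)
qed

lemma word_eqv_app_right: "word_eqv R u v \<Longrightarrow> word_eqv R (u @ y) (v @ y)"
proof (induction rule: word_eqv.induct)
  case (cancel u x b v) then show ?case
    using word_eqv.cancel[of R u x b "v @ y"] by simp
next
  case (rel l r u v) then show ?case
    using word_eqv.rel[of l r R u "v @ y"] by simp
next
  case refl then show ?case by (rule word_eqv.refl)
next
  case sym then show ?case by (metis word_eqv.sym)
next
  case trans then show ?case by (metis word_eqv.trans)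
qed

lemma word_eqv_app: "word_eqv R u v \<Longrightarrow> word_eqv R u' v' \<Longrightarrow> word_eqv R (u @ u') (v @ v')"
  by (meson word_eqv.trans word_eqv_app_left word_eqv_app_right)

lemma word_class_eq_iff: "word_class R u = word_class R v \<longleftrightarrow> word_eqv R u v"
proof
  assume "word_class R u = word_class R v"
  then have "v \<in> word_class R u" by (simp add: word_class_def word_eqv.refl)
  then show "word_eqv R u v" by (simp add: word_class_def)
next
  assume h: "word_eqv R u v"
  show "word_class R u = word_class R v"
    unfolding word_class_def using h
    by (auto intro: word_eqv.trans word_eqv.sym)
qed

lemma some_word_class: "word_eqv R u (SOME w. w \<in> word_class R u)"
proof -
  have "u \<in> word_class R u" by (simp add: word_class_def word_eqv.refl)
  then have "(SOME w. w \<in> word_class R u) \<in> word_class R u" by (rule someI)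
  then show ?thesis by (simp add: word_class_def)
qed

lemma pres_mult: "word_class R u \<otimes>\<^bsub>pres_group R\<^esub> word_class R v = word_class R (u @ v)"
  unfolding pres_group_def
  by (simp add: word_class_eq_iff word_eqv_app some_word_class word_eqv.sym)

lemma pres_one: "\<one>\<^bsub>pres_group R\<^esub> = word_class R []"
  by (simp add: pres_group_def)

lemma pres_carrier: "carrier (pres_group R) = range (word_class R)"
  by (simp add: pres_group_def)

definition winv :: "('g \<times> bool) list \<Rightarrow> ('g \<times> bool) list" where
  "winv w = rev (map (\<lambda>(x, b). (x, \<not> b)) w)"

lemma winv_simps [simp]: "winv [] = []" "winv ((x, b) # w) = winv w @ [(x, \<not> b)]"
  "winv (u @ v) = winv v @ winv u"
  by (auto simp: winv_def)

lemma winv_winv [simp]: "winv (winv w) = w"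
  by (induction w) (auto simp: winv_def)

lemma word_eqv_winv_r: "word_eqv R (w @ winv w) []"
proof (induction w)
  case Nil then show ?case by (simp add: word_eqv.refl)
next
  case (Cons p w)
  obtain x b where p: "p = (x, b)" by (cases p)
  have "word_eqv R ([(x, b)] @ (w @ winv w) @ [(x, \<not> b)]) ([(x, b)] @ [] @ [(x, \<not> b)])"
    using Cons word_eqv_app_left word_eqv_app_right by blast
  moreover have "word_eqv R ([] @ [(x, b), (x, \<not> b)] @ []) ([] @ [])"
    by (rule word_eqv.cancel)
  ultimately show ?case using p by (auto intro: word_eqv.trans)
qed

lemma word_eqv_winv_l: "word_eqv R (winv w @ w) []"
  using word_eqv_winv_r[of R "winv w"] by simp

lemma pres_group_is_group: "group (pres_group R)"
proof (rule groupI)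
  fix x y assume "x \<in> carrier (pres_group R)" "y \<in> carrier (pres_group R)"
  then show "x \<otimes>\<^bsub>pres_group R\<^esub> y \<in> carrier (pres_group R)"
    by (auto simp: pres_carrier pres_mult)
next
  show "\<one>\<^bsub>pres_group R\<^esub> \<in> carrier (pres_group R)" by (simp add: pres_carrier pres_one)
next
  fix x y z assume "x \<in> carrier (pres_group R)" "y \<in> carrier (pres_group R)" "z \<in> carrier (pres_group R)"
  then show "x \<otimes>\<^bsub>pres_group R\<^esub> y \<otimes>\<^bsub>pres_group R\<^esub> z =
             x \<otimes>\<^bsub>pres_group R\<^esub> (y \<otimes>\<^bsub>pres_group R\<^esub> z)"
    by (auto simp: pres_carrier pres_mult)
next
  fix x assume "x \<in> carrier (pres_group R)"
  then show "\<one>\<^bsub>pres_group R\<^esub> \<otimes>\<^bsub>pres_group R\<^esub> x = x"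
    by (auto simp: pres_carrier pres_mult pres_one)
next
  fix x assume "x \<in> carrier (pres_group R)"
  then obtain w where w: "x = word_class R w" by (auto simp: pres_carrier)
  show "\<exists>y\<in>carrier (pres_group R). y \<otimes>\<^bsub>pres_group R\<^esub> x = \<one>\<^bsub>pres_group R\<^esub>"
    by (rule bexI[of _ "word_class R (winv w)"])
       (auto simp: w pres_carrier pres_mult pres_one word_class_eq_iff word_eqv_winv_l)
qed

lemma pres_inv: "inv\<^bsub>pres_group R\<^esub> (word_class R w) = word_class R (winv w)"
proof -
  interpret group "pres_group R" by (rule pres_group_is_group)
  have m: "word_class R (winv w) \<otimes>\<^bsub>pres_group R\<^esub> word_class R w = \<one>\<^bsub>pres_group R\<^esub>"
    unfolding pres_mult pres_one word_class_eq_iff by (rule word_eqv_winv_l)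
  show ?thesis
    by (rule inv_equality[OF m]) (simp_all add: pres_carrier)
qed

lemma pres_rel: "(l, r) \<in> R \<Longrightarrow> word_class R l = word_class R r"
  using word_eqv.rel[of l r R "[]" "[]"] by (simp add: word_class_eq_iff)

lemma pres_letter: "word_class R [(g, False)] = pres_gen R g"
  "word_class R [(g, True)] = inv\<^bsub>pres_group R\<^esub> (pres_gen R g)"
  by (simp_all add: pres_gen_def pres_inv)

lemma pres_gen_carrier: "pres_gen R g \<in> carrier (pres_group R)"
  by (simp add: pres_gen_def pres_carrier)

lemma pres_cons: "word_class R (p # w) = word_class R [p] \<otimes>\<^bsub>pres_group R\<^esub> word_class R w"
  by (simp add: pres_mult)

lemma pres_replicate: "word_class R (replicate n p) = word_class R [p] [^]\<^bsub>pres_group R\<^esub> n"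
proof (induction n)
  case 0 then show ?case by (simp add: pres_one)
next
  case (Suc n)
  have "replicate (Suc n) p = replicate n p @ [p]" by (simp add: replicate_append_same)
  then have "word_class R (replicate (Suc n) p) = word_class R (replicate n p) \<otimes>\<^bsub>pres_group R\<^esub> word_class R [p]"
    by (simp only: pres_mult)
  also have "\<dots> = word_class R [p] [^]\<^bsub>pres_group R\<^esub> n \<otimes>\<^bsub>pres_group R\<^esub> word_class R [p]"
    by (simp only: Suc)
  also have "\<dots> = word_class R [p] [^]\<^bsub>pres_group R\<^esub> Suc n"
    by (simp only: monoid.nat_pow_Suc[OF group.is_monoid[OF pres_group_is_group]])
  finally show ?case .
qed

lemma pres_wpow: "word_class R (wpow g k) = pres_gen R g [^]\<^bsub>pres_group R\<^esub> k"
proof -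
  interpret group "pres_group R" by (rule pres_group_is_group)
  have gc: "pres_gen R g \<in> carrier (pres_group R)" by (rule pres_gen_carrier)
  show ?thesis
  proof (cases "0 \<le> k")
    case True
    then have "wpow g k = replicate (nat k) (g, False)" by (simp add: wpow_def)
    moreover have nk: "\<not> k < 0" using True by simp
    ultimately show ?thesis
      by (simp only: pres_replicate pres_letter int_pow_def2 if_not_P[OF nk] if_False)
  next
    case False
    then have "wpow g k = replicate (nat (- k)) (g, True)" by (simp add: wpow_def)
    moreover have nk: "k < 0" using False by simp
    ultimately show ?thesis
      by (simp only: pres_replicate pres_letter int_pow_def2 if_P[OF nk] if_True nat_pow_inv[OF gc])
  qed
qed

section \<open>Evaluation in a group (universal property)\<close>

definition pres_hom :: "('b, 'c) monoid_scheme \<Rightarrow> ('g \<Rightarrow> 'b) \<Rightarrow> (('g \<times> bool) list \<times> ('g \<times> bool) list) set \<Rightarrow> ('g \<times> bool) list set \<Rightarrow> 'b" where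
  "pres_hom H f R Y = foldr (\<lambda>(x, b) r. (if b then inv\<^bsub>H\<^esub> (f x) else f x) \<otimes>\<^bsub>H\<^esub> r) (SOME w. w \<in> Y) \<one>\<^bsub>H\<^esub>"

definition evw :: "('b, 'c) monoid_scheme \<Rightarrow> ('g \<Rightarrow> 'b) \<Rightarrow> ('g \<times> bool) list \<Rightarrow> 'b" where
  "evw H f w = foldr (\<lambda>(x, b) r. (if b then inv\<^bsub>H\<^esub> (f x) else f x) \<otimes>\<^bsub>H\<^esub> r) w \<one>\<^bsub>H\<^esub>"

context
  fixes H :: "('b, 'c) monoid_scheme" and f :: "'g \<Rightarrow> 'b"
  assumes H: "group H" and f: "\<And>x. f x \<in> carrier H"
begin

interpretation H: group H by (rule H)

lemma evw_closed: "evw H f w \<in> carrier H"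
  by (induction w) (auto simp: evw_def f)

lemma evw_Nil [simp]: "evw H f [] = \<one>\<^bsub>H\<^esub>" by (simp add: evw_def)

lemma evw_Cons: "evw H f ((x, b) # w) = (if b then inv\<^bsub>H\<^esub> (f x) else f x) \<otimes>\<^bsub>H\<^esub> evw H f w"
  by (simp add: evw_def)

lemma evw_append: "evw H f (u @ v) = evw H f u \<otimes>\<^bsub>H\<^esub> evw H f v"
proof (induction u)
  case Nil then show ?case by (simp add: evw_closed)
next
  case (Cons p u)
  obtain x b where p: "p = (x, b)" by (cases p)
  show ?case using Cons by (simp add: p evw_Cons H.m_assoc evw_closed f)
qed

lemma evw_cancel: "evw H f ((x, b) # (x, \<not> b) # v) = evw H f v"
proof -
  have c: "evw H f v \<in> carrier H" by (rule evw_closed)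
  show ?thesis
    by (cases b) (simp_all add: evw_Cons f c H.m_assoc[symmetric])
qed

lemma evw_word_eqv:
  assumes rels: "\<And>l r. (l, r) \<in> R \<Longrightarrow> evw H f l = evw H f r"
  shows "word_eqv R u v \<Longrightarrow> evw H f u = evw H f v"
proof (induction rule: word_eqv.induct)
  case (cancel u x b v)
  show ?case by (simp add: evw_append evw_cancel del: evw_Cons)
next
  case (rel l r u v)
  then show ?case by (simp add: evw_append rels)
qed auto

lemma pres_hom_class:
  assumes rels: "\<And>l r. (l, r) \<in> R \<Longrightarrow> evw H f l = evw H f r"
  shows "pres_hom H f R (word_class R w) = evw H f w"
  unfolding pres_hom_def evw_def[symmetric]
  using evw_word_eqv[OF rels some_word_class[of R w]] by simp

lemma pres_hom_hom:
  assumes rels: "\<And>l r. (l, r) \<in> R \<Longrightarrow> evw H f l = evw H f r"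
  shows "pres_hom H f R \<in> hom (pres_group R) H"
proof (rule homI)
  fix x assume "x \<in> carrier (pres_group R)"
  then obtain w where "x = word_class R w" by (auto simp: pres_carrier)
  then show "pres_hom H f R x \<in> carrier H" by (simp add: pres_hom_class[OF rels] evw_closed)
next
  fix x y assume "x \<in> carrier (pres_group R)" "y \<in> carrier (pres_group R)"
  then obtain u v where "x = word_class R u" "y = word_class R v" by (auto simp: pres_carrier)
  then show "pres_hom H f R (x \<otimes>\<^bsub>pres_group R\<^esub> y) = pres_hom H f R x \<otimes>\<^bsub>H\<^esub> pres_hom H f R y"
    by (simp add: pres_mult pres_hom_class[OF rels] evw_append)
qed

lemma pres_hom_gen:
  assumes rels: "\<And>l r. (l, r) \<in> R \<Longrightarrow> evw H f l = evw H f r"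
  shows "pres_hom H f R (pres_gen R g) = f g"
  using pres_hom_class[OF rels, where w="[(g, False)]"] by (simp add: pres_gen_def evw_Cons f)

lemma evw_replicate: "evw H f (replicate n (g, bb)) = (if bb then inv\<^bsub>H\<^esub> (f g) else f g) [^]\<^bsub>H\<^esub> n"
proof (induction n)
  case 0 then show ?case by simp
next
  case (Suc n)
  have c: "(if bb then inv\<^bsub>H\<^esub> (f g) else f g) \<in> carrier H" using f by simp
  have "evw H f (replicate (Suc n) (g, bb)) = (if bb then inv\<^bsub>H\<^esub> (f g) else f g) \<otimes>\<^bsub>H\<^esub> evw H f (replicate n (g, bb))"
    by (simp only: replicate_Suc evw_Cons)
  also have "\<dots> = (if bb then inv\<^bsub>H\<^esub> (f g) else f g) [^]\<^bsub>H\<^esub> Suc n"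
    by (simp only: Suc H.nat_pow_Suc2[OF c])
  finally show ?case .
qed

lemma evw_wpow: "evw H f (wpow g k) = f g [^]\<^bsub>H\<^esub> k"
proof (cases "0 \<le> k")
  case True
  then have nk: "\<not> k < 0" by simp
  show ?thesis
    by (simp only: wpow_def if_P[OF True] evw_replicate if_False int_pow_def2 if_not_P[OF nk])
next
  case False
  then have nk: "k < 0" by simp
  show ?thesis
    by (simp only: wpow_def if_not_P[OF False] evw_replicate if_True int_pow_def2 if_P[OF nk] H.nat_pow_inv[OF f])
qed

end


lemma (in group) pow_mod_gen:
  assumes x: "x \<in> carrier G" and m: "x [^] (m::nat) = \<one>"
  shows "x [^] (i mod m) = x [^] (i::nat)"
proof -
  have "x [^] (m * (i div m)) \<otimes> x [^] (i mod m) = x [^] (m * (i div m) + i mod m)"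
    by (rule nat_pow_mult[OF x])
  also have "m * (i div m) + i mod m = i" by simp
  also have "x [^] (m * (i div m)) = \<one>" by (simp add: nat_pow_pow[symmetric] m x)
  finally show ?thesis using x by simp
qed

lemma (in group) inv_pow_gen:
  assumes x: "x \<in> carrier G" and m: "x [^] (Suc k) = \<one>"
  shows "inv x = x [^] k"
proof (rule inv_equality)
  show "x [^] k \<otimes> x = \<one>" using m by simp
qed (simp_all add: x)

lemma (in group) mult_eq_one_inv:
  assumes "x \<in> carrier G" "y \<in> carrier G" "x \<otimes> y = \<one>"
  shows "y = inv x"
  using assms inv_comm inv_equality by metis

lemma (in monoid) pma:
  "x \<in> carrier G \<Longrightarrow> y \<in> carrier G \<Longrightarrow> x [^] (i::nat) \<otimes> (x [^] (j::nat) \<otimes> y) = x [^] (i + j) \<otimes> y"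
  by (simp add: m_assoc[symmetric] nat_pow_mult)

lemma (in group) pow_in_generate:
  assumes x: "x \<in> carrier G" shows "x [^] (k::nat) \<in> generate G {x}"
proof (induction k)
  case 0 then show ?case by (simp add: generate.one)
next
  case (Suc k)
  then show ?case using generate.eng[OF Suc generate.incl[of x "{x}"]] by simp
qed

lemma (in group) generate_single_sub:
  assumes x: "x \<in> carrier G" and m: "x [^] (m::nat) = \<one>" and m0: "0 < m"
  shows "generate G {x} \<subseteq> {x [^] i | i. i < m}"
proof
  fix y assume "y \<in> generate G {x}"
  then show "y \<in> {x [^] i | i. i < m}"
  proof (induction rule: generate.induct)
    case one then show ?case using m0 by (auto intro!: exI[of _ 0])
  next
    case (incl h)
    then have "h = x" by simp
    moreover have "x = x [^] (1 mod m)" using pow_mod_gen[OF x m, of 1] x by simp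
    moreover have "1 mod m < m" using m0 by simp
    ultimately show ?case by blast
  next
    case (inv h)
    have e: "Suc (m - 1) = m" using m0 by simp
    have "inv h = x [^] (m - 1)" using inv inv_pow_gen[OF x, of "m - 1"] m e by simp
    then show ?case using m0 by auto
  next
    case (eng h1 h2)
    then obtain i j :: nat where "h1 = x [^] i" "h2 = x [^] j" by auto
    then have "h1 \<otimes> h2 = x [^] ((i + j) mod m)" by (simp add: nat_pow_mult x pow_mod_gen[OF x m])
    then show ?case using m0 by auto
  qed
qed

lemma (in group) ord_eqI:
  assumes x: "x \<in> carrier G" and m: "x [^] (m::nat) = \<one>" and m0: "0 < m"
    and ne: "\<And>k. 0 < k \<Longrightarrow> k < m \<Longrightarrow> x [^] k \<noteq> \<one>"
  shows "ord x = m"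
proof -
  have d: "ord x dvd m" using pow_eq_id[OF x] m by simp
  then have "ord x \<le> m" "0 < ord x" using m0 by (auto intro: dvd_imp_le)
  moreover have "x [^] ord x = \<one>" using pow_eq_id[OF x] by simp
  ultimately show ?thesis using ne by (meson le_neq_implies_less)
qed

locale L2 = group G for G (structure) +
  fixes a b c :: 'a and w u :: nat
  assumes a [simp]: "a \<in> carrier G" and b [simp]: "b \<in> carrier G" and c [simp]: "c \<in> carrier G"
  and w: "0 < w" and u: "u = 1 \<or> u = 3"
  and R1: "a [^] (4::nat) = \<one>" and R2: "b [^] (8::nat) = \<one>" and R3: "c [^] (16 * w) = \<one>"
  and R4: "a \<otimes> b \<otimes> a \<otimes> b = \<one>" and R5: "b \<otimes> c \<otimes> b \<otimes> c = \<one>"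
  and R6: "a \<otimes> b \<otimes> c \<otimes> a \<otimes> b \<otimes> c = \<one>"
  and R7: "b \<otimes> b \<otimes> a = a \<otimes> b \<otimes> b"
  and R8: "c \<otimes> b \<otimes> b = b \<otimes> b \<otimes> c [^] (1 + 4 * w * u)"
begin

lemmas cl = a b c nat_pow_closed m_closed inv_closed pma

abbreviation "n \<equiv> 16 * w"
abbreviation "s \<equiv> 1 + 4 * w * u"

lemma inv_a: "inv a = a [^] (3::nat)"
  using inv_pow_gen[OF a, of 3] R1 by (simp add: numeral_eq_Suc del: nat_pow_Suc)

lemma inv_b: "inv b = b [^] (7::nat)"
  using inv_pow_gen[OF b, of 7] R2 by (simp add: numeral_eq_Suc del: nat_pow_Suc)

lemma inv_c: "inv c = c [^] (n - 1)"
proof -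
  have "Suc (n - 1) = n" using w by simp
  then show ?thesis using inv_pow_gen[OF c, of "n - 1"] R3 by simp
qed

lemma amod: "a [^] (i mod 4) = a [^] (i::nat)" using pow_mod_gen[OF a R1] .
lemma bmod: "b [^] (i mod 8) = b [^] (i::nat)" using pow_mod_gen[OF b R2] .
lemma cmod: "c [^] (i mod n) = c [^] (i::nat)" using pow_mod_gen[OF c R3] .

lemma F1: "b \<otimes> a = a [^] (3::nat) \<otimes> b [^] (7::nat)"
proof -
  have "a \<otimes> (b \<otimes> a \<otimes> b) = \<one>" using R4 by (simp add: m_assoc)
  then have "b \<otimes> a \<otimes> b = inv a" by (intro mult_eq_one_inv) auto
  then have "b \<otimes> a = inv a \<otimes> inv b" by (simp add: inv_solve_right)
  then show ?thesis by (simp add: inv_a inv_b)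
qed

lemma b2a: "b [^] (2::nat) \<otimes> a = a \<otimes> b [^] (2::nat)"
  using R7 by (simp add: numeral_eq_Suc m_assoc)

lemma b2m_a: "b [^] (2 * (m::nat)) \<otimes> a = a \<otimes> b [^] (2 * m)"
proof -
  have "(b [^] (2::nat)) [^] m \<otimes> a = a \<otimes> (b [^] (2::nat)) [^] m"
    by (rule group_commutes_pow) (simp_all add: b2a)
  then show ?thesis by (simp add: nat_pow_pow)
qed

lemma b2m_ai: "b [^] (2 * (m::nat)) \<otimes> a [^] (i::nat) = a [^] i \<otimes> b [^] (2 * m)"
  by (rule group_commutes_pow[symmetric]) (simp_all add: b2m_a)

lemma F3: "c \<otimes> a = a \<otimes> b [^] (2::nat) \<otimes> c"
proof -
  have ab: "a \<otimes> b \<otimes> (a \<otimes> b) = \<one>" using R4 by (simp add: m_assoc)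
  have bc: "b \<otimes> c \<otimes> (b \<otimes> c) = \<one>" using R5 by (simp add: m_assoc)
  have "a \<otimes> b \<otimes> (c \<otimes> a \<otimes> b \<otimes> c) = \<one>" using R6 by (simp add: m_assoc)
  then have "c \<otimes> a \<otimes> b \<otimes> c = inv (a \<otimes> b)" by (intro mult_eq_one_inv) auto
  also have "inv (a \<otimes> b) = a \<otimes> b" using mult_eq_one_inv[OF _ _ ab] by simp
  finally have "c \<otimes> a \<otimes> (b \<otimes> c) = a \<otimes> b" by (simp add: m_assoc)
  then have "c \<otimes> a = a \<otimes> b \<otimes> inv (b \<otimes> c)" by (simp add: inv_solve_right)
  also have "inv (b \<otimes> c) = b \<otimes> c" using mult_eq_one_inv[OF _ _ bc] by simp
  finally show ?thesis by (simp add: numeral_eq_Suc m_assoc)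
qed

lemma F4: "c \<otimes> b = b [^] (7::nat) \<otimes> c [^] (n - 1)"
proof -
  have "b \<otimes> (c \<otimes> b \<otimes> c) = \<one>" using R5 by (simp add: m_assoc)
  then have "c \<otimes> b \<otimes> c = inv b" by (intro mult_eq_one_inv) auto
  then have "c \<otimes> b = inv b \<otimes> inv c" by (simp add: inv_solve_right)
  then show ?thesis by (simp add: inv_b inv_c)
qed

lemma cb2: "c \<otimes> b [^] (2::nat) = b [^] (2::nat) \<otimes> c [^] s"
  using R8 by (simp add: numeral_eq_Suc m_assoc)

lemma ck_b2: "c [^] (k::nat) \<otimes> b [^] (2::nat) = b [^] (2::nat) \<otimes> c [^] (k * s)"
proof (induction k)
  case 0 then show ?case by simp
next
  case (Suc k)
  have "c [^] Suc k \<otimes> b [^] (2::nat) = c [^] k \<otimes> (c \<otimes> b [^] (2::nat))"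
    by (simp add: m_assoc)
  also have "\<dots> = (c [^] k \<otimes> b [^] (2::nat)) \<otimes> c [^] s" by (simp add: cb2 m_assoc)
  also have "\<dots> = b [^] (2::nat) \<otimes> c [^] (k * s + s)" by (simp only: Suc m_assoc nat_pow_mult cl)
  also have "k * s + s = Suc k * s" by simp
  finally show ?case .
qed

lemma F5: "c [^] (k::nat) \<otimes> b [^] (2 * (m::nat)) = b [^] (2 * m) \<otimes> c [^] (k * s ^ m)"
proof (induction m arbitrary: k)
  case 0 then show ?case by simp
next
  case (Suc m)
  have e: "b [^] (2 * Suc m) = b [^] (2 * m) \<otimes> b [^] (2::nat)"
    by (simp only: nat_pow_mult cl mult_Suc_right add_2_eq_Suc'[symmetric] add.commute)
  have "c [^] k \<otimes> b [^] (2 * Suc m) = (c [^] k \<otimes> b [^] (2 * m)) \<otimes> b [^] (2::nat)"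
    by (simp only: e m_assoc cl)
  also have "\<dots> = b [^] (2 * m) \<otimes> (c [^] (k * s ^ m) \<otimes> b [^] (2::nat))" by (simp only: Suc m_assoc cl)
  also have "\<dots> = b [^] (2 * Suc m) \<otimes> c [^] (k * s ^ m * s)" by (simp only: ck_b2 e m_assoc cl)
  also have "k * s ^ m * s = k * s ^ Suc m" by (simp only: power_Suc2 mult.assoc)
  finally show ?case .
qed


lemma c1: "c [^] (1::nat) = c" by simp

lemma c_b2m: "c \<otimes> b [^] (2 * (m::nat)) = b [^] (2 * m) \<otimes> c [^] (s ^ m)"
  using F5[of 1 m] by simp

lemma F6: "c [^] (k::nat) \<otimes> a = a \<otimes> b [^] (2 * k) \<otimes> c [^] (\<Sum>i<k. s ^ i)"
proof (induction k)
  case 0 then show ?case by simp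
next
  case (Suc k)
  have "c [^] Suc k \<otimes> a = c \<otimes> (c [^] k \<otimes> a)"
    by (simp only: nat_pow_Suc2 m_assoc cl)
  also have "\<dots> = (c \<otimes> a) \<otimes> (b [^] (2 * k) \<otimes> c [^] (\<Sum>i<k. s ^ i))"
    by (simp only: Suc m_assoc cl)
  also have "\<dots> = a \<otimes> b [^] (2::nat) \<otimes> ((c \<otimes> b [^] (2 * k)) \<otimes> c [^] (\<Sum>i<k. s ^ i))"
    by (simp only: F3 m_assoc cl)
  also have "\<dots> = a \<otimes> (b [^] (2::nat) \<otimes> b [^] (2 * k)) \<otimes> (c [^] (s ^ k) \<otimes> c [^] (\<Sum>i<k. s ^ i))"
    by (simp only: c_b2m m_assoc cl)
  also have "\<dots> = a \<otimes> b [^] (2 + 2 * k) \<otimes> c [^] (s ^ k + (\<Sum>i<k. s ^ i))"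
    by (simp only: nat_pow_mult cl)
  also have "2 + 2 * k = 2 * Suc k" by simp
  also have "s ^ k + (\<Sum>i<k. s ^ i) = (\<Sum>i<Suc k. s ^ i)" by simp
  finally show ?case .
qed

lemma b_a: "\<exists>i' j'. b [^] (j::nat) \<otimes> a = a [^] (i'::nat) \<otimes> b [^] (j'::nat)"
proof (cases "even j")
  case True
  then obtain m where j: "j = 2 * m" by blast
  show ?thesis by (rule exI[of _ 1], rule exI[of _ j]) (simp add: j b2m_a)
next
  case False
  then obtain m where j: "j = Suc (2 * m)" by (metis oddE Suc_eq_plus1)
  have "b [^] j \<otimes> a = b [^] (2 * m) \<otimes> (b \<otimes> a)"
    by (simp only: j nat_pow_Suc m_assoc cl)
  also have "\<dots> = (b [^] (2 * m) \<otimes> a [^] (3::nat)) \<otimes> b [^] (7::nat)"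
    by (simp only: F1 m_assoc cl)
  also have "\<dots> = a [^] (3::nat) \<otimes> b [^] (2 * m + 7)"
    by (simp only: b2m_ai m_assoc nat_pow_mult cl)
  finally show ?thesis by blast
qed

lemma b_ai: "\<exists>i' j'. b [^] (j::nat) \<otimes> a [^] (i::nat) = a [^] (i'::nat) \<otimes> b [^] (j'::nat)"
proof (induction i arbitrary: j)
  case 0 then show ?case by (rule exI[of _ 0], rule exI[of _ j]) simp
next
  case (Suc i)
  obtain i1 j1 where e1: "b [^] j \<otimes> a [^] i = a [^] (i1::nat) \<otimes> b [^] (j1::nat)" using Suc by blast
  obtain i2 j2 where e2: "b [^] j1 \<otimes> a = a [^] (i2::nat) \<otimes> b [^] (j2::nat)" using b_a by blast
  have "b [^] j \<otimes> a [^] Suc i = (b [^] j \<otimes> a [^] i) \<otimes> a" by (simp only: nat_pow_Suc m_assoc cl)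
  also have "\<dots> = a [^] i1 \<otimes> (b [^] j1 \<otimes> a)" by (simp only: e1 m_assoc cl)
  also have "\<dots> = a [^] (i1 + i2) \<otimes> b [^] j2" by (simp only: e2 m_assoc nat_pow_mult cl)
  finally show ?case by blast
qed

lemma c_bj: "\<exists>j' l. c \<otimes> b [^] (j::nat) = b [^] (j'::nat) \<otimes> c [^] (l::nat)"
proof (cases "even j")
  case True
  then obtain m where j: "j = 2 * m" by blast
  show ?thesis using c_b2m[of m] j by blast
next
  case False
  then obtain m where j: "j = Suc (2 * m)" by (metis oddE Suc_eq_plus1)
  have "c \<otimes> b [^] j = (c \<otimes> b) \<otimes> b [^] (2 * m)"
    by (simp only: j nat_pow_Suc2 m_assoc cl)
  also have "\<dots> = b [^] (7::nat) \<otimes> (c [^] (n - 1) \<otimes> b [^] (2 * m))"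
    by (simp only: F4 m_assoc cl)
  also have "\<dots> = b [^] (7 + 2 * m) \<otimes> c [^] ((n - 1) * s ^ m)"
    by (simp only: F5 m_assoc nat_pow_mult cl)
  finally show ?thesis by blast
qed

lemma ck_bj: "\<exists>j' l. c [^] (k::nat) \<otimes> b [^] (j::nat) = b [^] (j'::nat) \<otimes> c [^] (l::nat)"
proof (induction k arbitrary: j)
  case 0 then show ?case by (rule exI[of _ j], rule exI[of _ 0]) simp
next
  case (Suc k)
  obtain j1 l1 where e1: "c [^] k \<otimes> b [^] j = b [^] (j1::nat) \<otimes> c [^] (l1::nat)" using Suc by blast
  obtain j2 l2 where e2: "c \<otimes> b [^] j1 = b [^] (j2::nat) \<otimes> c [^] (l2::nat)" using c_bj by blast
  have "c [^] Suc k \<otimes> b [^] j = c \<otimes> (c [^] k \<otimes> b [^] j)" by (simp only: nat_pow_Suc2 m_assoc cl)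
  also have "\<dots> = (c \<otimes> b [^] j1) \<otimes> c [^] l1" by (simp only: e1 m_assoc cl)
  also have "\<dots> = b [^] j2 \<otimes> c [^] (l2 + l1)" by (simp only: e2 m_assoc nat_pow_mult cl)
  finally show ?case by blast
qed

definition nf :: "nat \<Rightarrow> nat \<Rightarrow> nat \<Rightarrow> 'a" where
  "nf i j k = a [^] i \<otimes> b [^] j \<otimes> c [^] k"

definition NF :: "'a set" where
  "NF = {x. \<exists>i j k. x = nf i j k}"

lemma nf_closed [simp]: "nf i j k \<in> carrier G" by (simp add: nf_def)

lemma NF_c: "x \<in> NF \<Longrightarrow> x \<otimes> c \<in> NF"
proof -
  assume "x \<in> NF"
  then obtain i j k where x: "x = nf i j k" by (auto simp: NF_def)
  have "x \<otimes> c = nf i j (Suc k)" by (simp only: x nf_def nat_pow_Suc m_assoc cl)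
  then show ?thesis by (auto simp: NF_def)
qed

lemma NF_b: "x \<in> NF \<Longrightarrow> x \<otimes> b \<in> NF"
proof -
  assume "x \<in> NF"
  then obtain i j k where x: "x = nf i j k" by (auto simp: NF_def)
  obtain j1 l where e: "c [^] k \<otimes> b [^] (1::nat) = b [^] (j1::nat) \<otimes> c [^] (l::nat)" using ck_bj by blast
  have "x \<otimes> b = a [^] i \<otimes> b [^] j \<otimes> (c [^] k \<otimes> b [^] (1::nat))"
    by (simp only: x nf_def m_assoc cl c1 nat_pow_eone b)
  also have "\<dots> = nf i (j + j1) l" by (simp only: e nf_def m_assoc nat_pow_mult cl)
  finally show ?thesis by (auto simp: NF_def)
qed

lemma NF_a: "x \<in> NF \<Longrightarrow> x \<otimes> a \<in> NF"
proof -
  assume "x \<in> NF"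
  then obtain i j k where x: "x = nf i j k" by (auto simp: NF_def)
  obtain i1 j1 where e: "b [^] j \<otimes> a = a [^] (i1::nat) \<otimes> b [^] (j1::nat)" using b_a by blast
  have "x \<otimes> a = a [^] i \<otimes> b [^] j \<otimes> (c [^] k \<otimes> a)"
    by (simp only: x nf_def m_assoc cl)
  also have "\<dots> = a [^] i \<otimes> (b [^] j \<otimes> a) \<otimes> b [^] (2 * k) \<otimes> c [^] (\<Sum>i<k. s ^ i)"
    by (simp only: F6 m_assoc cl)
  also have "\<dots> = nf (i + i1) (j1 + 2 * k) (\<Sum>i<k. s ^ i)"
    by (simp only: e nf_def m_assoc nat_pow_mult cl)
  finally show ?thesis by (auto simp: NF_def)
qed

lemma NF_pow: "x \<in> NF \<Longrightarrow> y \<in> {a, b, c} \<Longrightarrow> x \<otimes> y [^] (m::nat) \<in> NF"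
proof (induction m)
  case 0
  have xc: "x \<in> carrier G" using 0 by (auto simp: NF_def)
  then show ?case using 0 by simp
next
  case (Suc m)
  have xc: "x \<in> carrier G" using Suc.prems by (auto simp: NF_def)
  have yc: "y \<in> carrier G" using Suc.prems by auto
  have "x \<otimes> y [^] Suc m = (x \<otimes> y [^] m) \<otimes> y" by (simp add: m_assoc xc yc)
  then show ?case using Suc NF_a NF_b NF_c by auto
qed

lemma NF_mult: "x \<in> NF \<Longrightarrow> y \<in> NF \<Longrightarrow> x \<otimes> y \<in> NF"
proof -
  assume x: "x \<in> NF" and "y \<in> NF"
  then obtain i j k where y: "y = nf i j k" by (auto simp: NF_def)
  have xc: "x \<in> carrier G" using x by (auto simp: NF_def)
  have "x \<otimes> y = ((x \<otimes> a [^] i) \<otimes> b [^] j) \<otimes> c [^] k" by (simp add: y nf_def m_assoc xc)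
  then show ?thesis using NF_pow x by auto
qed

lemma NF_one: "\<one> \<in> NF"
  by (auto simp: NF_def nf_def intro!: exI[of _ 0])

lemma NF_gens: "a \<in> NF" "b \<in> NF" "c \<in> NF" "inv a \<in> NF" "inv b \<in> NF" "inv c \<in> NF"
proof -
  have "a = nf 1 0 0" "b = nf 0 1 0" "c = nf 0 0 1" "inv a = nf 3 0 0" "inv b = nf 0 7 0"
    "inv c = nf 0 0 (n - 1)"
    by (simp_all only: nf_def inv_a inv_b inv_c nat_pow_0 nat_pow_eone cl l_one r_one one_closed)
  then show "a \<in> NF" "b \<in> NF" "c \<in> NF" "inv a \<in> NF" "inv b \<in> NF" "inv c \<in> NF"
    unfolding NF_def by blast+
qed

lemma generate_NF: "generate G {a, b, c} \<subseteq> NF"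
proof
  fix x assume "x \<in> generate G {a, b, c}"
  then show "x \<in> NF"
  proof (induction rule: generate.induct)
    case one then show ?case by (rule NF_one)
  next
    case (incl h) then show ?case using NF_gens by auto
  next
    case (inv h) then show ?case using NF_gens by auto
  next
    case (eng h1 h2) then show ?case using NF_mult by blast
  qed
qed

lemma nf_mod: "nf i j k = nf (i mod 4) (j mod 8) (k mod n)"
  by (simp only: nf_def amod bmod cmod)


end

locale L2i = L2 +
  assumes gen: "carrier G \<subseteq> generate G {a, b, c}"
  and inj: "\<And>i j k i' j' k'. i < 4 \<Longrightarrow> j < 8 \<Longrightarrow> k < 16 * w \<Longrightarrow> i' < 4 \<Longrightarrow> j' < 8 \<Longrightarrow> k' < 16 * w \<Longrightarrow>
     nf i j k = nf i' j' k' \<Longrightarrow> i = i' \<and> j = j' \<and> k = k'"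
  and w2: "\<exists>e. w = 2 ^ e"
begin

lemma carrier_NF: "carrier G = NF"
  using gen generate_NF by (auto simp: NF_def)

lemma nf_eq_iff: "nf i j k = nf i' j' k' \<longleftrightarrow> i mod 4 = i' mod 4 \<and> j mod 8 = j' mod 8 \<and> k mod n = k' mod n"
proof
  assume "nf i j k = nf i' j' k'"
  then have e: "nf (i mod 4) (j mod 8) (k mod n) = nf (i' mod 4) (j' mod 8) (k' mod n)"
    by (simp only: nf_mod[symmetric])
  show "i mod 4 = i' mod 4 \<and> j mod 8 = j' mod 8 \<and> k mod n = k' mod n"
    using inj[OF _ _ _ _ _ _ e] w by simp
next
  assume "i mod 4 = i' mod 4 \<and> j mod 8 = j' mod 8 \<and> k mod n = k' mod n"
  then show "nf i j k = nf i' j' k'" by (metis nf_mod)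
qed

lemma one_nf: "\<one> = nf 0 0 0" by (simp add: nf_def)

lemma carrier_image: "carrier G = (\<lambda>(i, j, k). nf i j k) ` ({..<4} \<times> {..<8} \<times> {..<n})"
proof
  show "carrier G \<subseteq> (\<lambda>(i, j, k). nf i j k) ` ({..<4} \<times> {..<8} \<times> {..<n})"
  proof
    fix x assume "x \<in> carrier G"
    then obtain i j k where "x = nf i j k" using carrier_NF by (auto simp: NF_def)
    then have "x = nf (i mod 4) (j mod 8) (k mod n)" using nf_mod by simp
    moreover have "(i mod 4, j mod 8, k mod n) \<in> {..<4} \<times> {..<8} \<times> {..<n}" using w by auto
    ultimately show "x \<in> (\<lambda>(i, j, k). nf i j k) ` ({..<4} \<times> {..<8} \<times> {..<n})" by force
  qed
qed auto

lemma inj_nf: "inj_on (\<lambda>(i, j, k). nf i j k) ({..<4} \<times> {..<8} \<times> {..<n})"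
  by (auto simp: inj_on_def dest: inj)

lemma order_G: "order G = 32 * n"
  unfolding order_def carrier_image
  by (simp add: card_image[OF inj_nf] card_cartesian_product)

lemma finite_G: "finite (carrier G)"
  unfolding carrier_image by simp

lemma a_pow_ne: "0 < k \<Longrightarrow> k < 4 \<Longrightarrow> a [^] (k::nat) \<noteq> \<one>"
proof
  assume k: "0 < k" "k < 4" and "a [^] k = \<one>"
  then have "nf k 0 0 = nf 0 0 0" by (simp add: nf_def)
  then show False using inj[of k 0 0 0 0 0] k w by simp
qed

lemma b_pow_ne: "0 < k \<Longrightarrow> k < 8 \<Longrightarrow> b [^] (k::nat) \<noteq> \<one>"
proof
  assume k: "0 < k" "k < 8" and "b [^] k = \<one>"
  then have "nf 0 k 0 = nf 0 0 0" by (simp add: nf_def)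
  then show False using inj[of 0 k 0 0 0 0] k w by simp
qed

lemma c_pow_ne: "0 < k \<Longrightarrow> k < n \<Longrightarrow> c [^] (k::nat) \<noteq> \<one>"
proof
  assume k: "0 < k" "k < n" and "c [^] k = \<one>"
  then have "nf 0 0 k = nf 0 0 0" by (simp add: nf_def)
  then show False using inj[of 0 0 k 0 0 0] k w by simp
qed

lemma ord_a: "ord a = 4" by (rule ord_eqI[OF a R1]) (auto dest: a_pow_ne)
lemma ord_b: "ord b = 8" by (rule ord_eqI[OF b R2]) (auto dest: b_pow_ne)
lemma ord_c: "ord c = n" by (rule ord_eqI[OF c R3]) (use w c_pow_ne in auto)

lemma a_ne: "a \<noteq> \<one>" using a_pow_ne[of 1] by simp
lemma b_ne: "b \<noteq> \<one>" using b_pow_ne[of 1] by simp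
lemma c_ne: "c \<noteq> \<one>" using c_pow_ne[of 1] w by simp

lemma gen_a: "generate G {a} \<subseteq> {a [^] (i::nat) | i. i < 4}"
  by (rule generate_single_sub[OF a R1]) simp
lemma gen_b: "generate G {b} \<subseteq> {b [^] (i::nat) | i. i < 8}"
  by (rule generate_single_sub[OF b R2]) simp
lemma gen_c: "generate G {c} \<subseteq> {c [^] (i::nat) | i. i < n}"
  by (rule generate_single_sub[OF c R3]) (use w in simp)

lemma gen_ab: "generate G {a, b} \<subseteq> {a [^] (i::nat) \<otimes> b [^] (j::nat) | i j. True}"
proof
  fix x assume "x \<in> generate G {a, b}"
  then show "x \<in> {a [^] (i::nat) \<otimes> b [^] (j::nat) | i j. True}"
  proof (induction rule: generate.induct)
    case one then show ?case by (auto intro!: exI[of _ "0::nat"])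
  next
    case (incl h)
    then have "h = a [^] (1::nat) \<otimes> b [^] (0::nat) \<or> h = a [^] (0::nat) \<otimes> b [^] (1::nat)" by auto
    then show ?case by blast
  next
    case (inv h)
    then have "inv h = a [^] (3::nat) \<otimes> b [^] (0::nat) \<or> inv h = a [^] (0::nat) \<otimes> b [^] (7::nat)"
      by (auto simp: inv_a inv_b simp del: nat_pow_Suc)
    then show ?case by blast
  next
    case (eng h1 h2)
    then obtain i j i' j' where h: "h1 = a [^] (i::nat) \<otimes> b [^] (j::nat)" "h2 = a [^] (i'::nat) \<otimes> b [^] (j'::nat)" by auto
    obtain i2 j2 where e: "b [^] j \<otimes> a [^] i' = a [^] (i2::nat) \<otimes> b [^] (j2::nat)" using b_ai by blast
    have "h1 \<otimes> h2 = a [^] i \<otimes> (b [^] j \<otimes> a [^] i') \<otimes> b [^] j'" by (simp only: h m_assoc cl)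
    also have "\<dots> = a [^] (i + i2) \<otimes> b [^] (j2 + j')" by (simp only: e m_assoc nat_pow_mult cl)
    finally show ?case by blast
  qed
qed

lemma gen_bc: "generate G {b, c} \<subseteq> {b [^] (j::nat) \<otimes> c [^] (k::nat) | j k. True}"
proof
  fix x assume "x \<in> generate G {b, c}"
  then show "x \<in> {b [^] (j::nat) \<otimes> c [^] (k::nat) | j k. True}"
  proof (induction rule: generate.induct)
    case one then show ?case by (auto intro!: exI[of _ "0::nat"])
  next
    case (incl h)
    then have "h = b [^] (1::nat) \<otimes> c [^] (0::nat) \<or> h = b [^] (0::nat) \<otimes> c [^] (1::nat)" by auto
    then show ?case by blast
  next
    case (inv h)
    then have "inv h = b [^] (7::nat) \<otimes> c [^] (0::nat) \<or> inv h = b [^] (0::nat) \<otimes> c [^] (n - 1)"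
      by (auto simp: inv_c inv_b simp del: nat_pow_Suc)
    then show ?case by blast
  next
    case (eng h1 h2)
    then obtain i j i' j' where h: "h1 = b [^] (i::nat) \<otimes> c [^] (j::nat)" "h2 = b [^] (i'::nat) \<otimes> c [^] (j'::nat)" by auto
    obtain i2 j2 where e: "c [^] j \<otimes> b [^] i' = b [^] (i2::nat) \<otimes> c [^] (j2::nat)" using ck_bj by blast
    have "h1 \<otimes> h2 = b [^] i \<otimes> (c [^] j \<otimes> b [^] i') \<otimes> c [^] j'" by (simp only: h m_assoc cl)
    also have "\<dots> = b [^] (i + i2) \<otimes> c [^] (j2 + j')" by (simp only: e m_assoc nat_pow_mult cl)
    finally show ?case by blast
  qed
qed

lemma gens_carrier: "generate G {a, b, c} = carrier G"
  using gen generate_incl[of "{a, b, c}"] by auto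

lemma int_ab: "generate G {a} \<inter> generate G {b} = {\<one>}"
proof
  show "generate G {a} \<inter> generate G {b} \<subseteq> {\<one>}"
  proof
    fix x assume x: "x \<in> generate G {a} \<inter> generate G {b}"
    then obtain i j :: nat where i: "x = a [^] i" "i < 4" and j: "x = b [^] j" "j < 8"
      using gen_a gen_b by blast
    then have "nf i 0 0 = nf 0 j 0" by (simp add: nf_def)
    then have "i = 0" "j = 0" using inj[of i 0 0 0 j 0] i j w by auto
    then show "x \<in> {\<one>}" using i by simp
  qed
  show "{\<one>} \<subseteq> generate G {a} \<inter> generate G {b}" by (auto intro: generate.one)
qed

lemma int_bc: "generate G {b} \<inter> generate G {c} = {\<one>}"
proof
  show "generate G {b} \<inter> generate G {c} \<subseteq> {\<one>}"
  proof
    fix x assume x: "x \<in> generate G {b} \<inter> generate G {c}"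
    then obtain i j :: nat where i: "x = b [^] i" "i < 8" and j: "x = c [^] j" "j < n"
      using gen_c gen_b by blast
    then have "nf 0 i 0 = nf 0 0 j" by (simp add: nf_def)
    then have "i = 0" "j = 0" using inj[of 0 i 0 0 0 j] i j w by auto
    then show "x \<in> {\<one>}" using i by simp
  qed
  show "{\<one>} \<subseteq> generate G {b} \<inter> generate G {c}" by (auto intro: generate.one)
qed

lemma int_ab_bc: "generate G {a, b} \<inter> generate G {b, c} = generate G {b}"
proof
  show "generate G {a, b} \<inter> generate G {b, c} \<subseteq> generate G {b}"
  proof
    fix x assume x: "x \<in> generate G {a, b} \<inter> generate G {b, c}"
    then obtain i j j' k where e1: "x = a [^] (i::nat) \<otimes> b [^] (j::nat)" and e2: "x = b [^] (j'::nat) \<otimes> c [^] (k::nat)"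
      using gen_ab gen_bc by blast
    then have "nf i j 0 = nf 0 j' k" by (simp add: nf_def)
    then have "i mod 4 = 0" by (simp add: nf_eq_iff)
    then have "x = b [^] j" using e1 by (metis amod nat_pow_0 l_one b nat_pow_closed)
    then show "x \<in> generate G {b}" by (simp add: pow_in_generate)
  qed
  show "generate G {b} \<subseteq> generate G {a, b} \<inter> generate G {b, c}"
    by (simp add: mono_generate)
qed

lemma rot: "rot_group4 G a b c"
  unfolding rot_group4_def
  using a_ne b_ne c_ne gens_carrier int_ab int_bc int_ab_bc R4 R5 R6 is_group
  by (simp add: numeral_eq_Suc m_assoc)


lemma s3_eq: "s ^ 3 = s + 8 * w * (u * (1 + 4 * w * u) * (1 + 2 * w * u))"
  by (simp add: power3_eq_cube algebra_simps)

lemma t_odd: "odd (u * (1 + 4 * w * u) * (1 + 2 * w * u))"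
  using u by auto

lemma odd_mult_mod: "odd t \<Longrightarrow> (8 * w * t) mod (16 * w) = 8 * w"
proof -
  assume "odd t"
  then obtain r where t: "t = 2 * r + 1" by (metis oddE)
  have "(8 * w * t) mod (16 * w) = (w * (8 * t)) mod (w * 16)" by (simp add: ac_simps)
  also have "\<dots> = w * ((8 * t) mod 16)" by (rule mod_mult_mult1)
  also have "(8 * t) mod 16 = 8" by (simp add: t)
  finally show ?thesis by (metis mult.commute)
qed

lemma s3_mod: "(s ^ 3) mod n \<noteq> s mod n"
proof
  define t where "t = u * (1 + 4 * w * u) * (1 + 2 * w * u)"
  assume h: "(s ^ 3) mod n = s mod n"
  have e: "s ^ 3 = s + 8 * w * t" using s3_eq by (simp add: t_def)
  have "n dvd (s ^ 3 - s)" using h mod_eq_dvd_iff_nat[of s "s ^ 3" n] e by simp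
  then have "n dvd 8 * w * t" using e by simp
  then have "(8 * w * t) mod n = 0" by simp
  then show False using odd_mult_mod[of t] t_odd w by (simp add: t_def)
qed

lemma s2_mod: "(s ^ 2 + n - 1) mod n = 8 * w"
proof -
  have e: "s ^ 2 + n - 1 = 8 * w * u + 16 * w * (1 + w * u * u)"
    by (simp add: power2_eq_square algebra_simps)
  have "(s ^ 2 + n - 1) mod n = (8 * w * u) mod n" by (simp only: e mod_mult_self2)
  also have "\<dots> = 8 * w" using odd_mult_mod[of u] u by auto
  finally show ?thesis .
qed

lemma b6: "b [^] (6::nat) \<otimes> a [^] (3::nat) = a [^] (3::nat) \<otimes> b [^] (6::nat)"
  using b2m_ai[of 3 3] by simp

lemma b7: "b [^] (7::nat) = b [^] (6::nat) \<otimes> b"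
  using nat_pow_mult[OF b, of 6 1] by simp

lemma a2: "a [^] (2::nat) = a \<otimes> a"
  by (simp add: numeral_2_eq_2)

lemma b_a2: "b \<otimes> a [^] (2::nat) = a [^] (2::nat) \<otimes> b [^] (5::nat)"
proof -
  have "b \<otimes> a [^] (2::nat) = (b \<otimes> a) \<otimes> a" by (simp only: a2 m_assoc cl)
  also have "\<dots> = a [^] (3::nat) \<otimes> (b [^] (6::nat) \<otimes> (b \<otimes> a))"
    by (simp only: F1 b7 m_assoc cl)
  also have "\<dots> = a [^] (3::nat) \<otimes> ((b [^] (6::nat) \<otimes> a [^] (3::nat)) \<otimes> b [^] (7::nat))"
    by (simp only: F1 m_assoc cl)
  also have "\<dots> = a [^] (3 + 3 :: nat) \<otimes> b [^] (6 + 7 :: nat)"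
    by (simp only: b6 m_assoc cl nat_pow_mult)
  also have "\<dots> = a [^] (2::nat) \<otimes> b [^] (5::nat)"
    using amod[of 6] bmod[of 13] by simp
  finally show ?thesis .
qed

lemma BB: "(a [^] (2::nat) \<otimes> b) \<otimes> (a [^] (2::nat) \<otimes> b) = b [^] (2 * 3 :: nat)"
proof -
  have "(a [^] (2::nat) \<otimes> b) \<otimes> (a [^] (2::nat) \<otimes> b) = a [^] (2::nat) \<otimes> ((b \<otimes> a [^] (2::nat)) \<otimes> b [^] (1::nat))"
    by (simp only: m_assoc cl nat_pow_eone)
  also have "\<dots> = a [^] (2 + 2 :: nat) \<otimes> b [^] (5 + 1 :: nat)"
    by (simp only: b_a2 m_assoc cl nat_pow_mult)
  also have "\<dots> = b [^] (2 * 3 :: nat)" using R1 by simp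
  finally show ?thesis .
qed

lemma aab: "a \<otimes> a \<otimes> b = a [^] (2::nat) \<otimes> b" by (simp add: numeral_eq_Suc)

lemma chiral: "\<not> (\<exists>\<phi>. \<phi> \<in> iso G G \<and> \<phi> a = inv a \<and> \<phi> b = a \<otimes> a \<otimes> b \<and> \<phi> c = c)"
proof
  assume "\<exists>\<phi>. \<phi> \<in> iso G G \<and> \<phi> a = inv a \<and> \<phi> b = a \<otimes> a \<otimes> b \<and> \<phi> c = c"
  then obtain \<phi> where ph: "\<phi> \<in> hom G G" "\<phi> b = a [^] (2::nat) \<otimes> b" "\<phi> c = c"
    by (auto simp: iso_def aab)
  interpret gh: group_hom G G \<phi> by (unfold_locales) (rule ph(1))
  have "\<phi> (c \<otimes> b \<otimes> b) = \<phi> (b \<otimes> b \<otimes> c [^] s)" using R8 by simp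
  then have "c \<otimes> ((a [^] (2::nat) \<otimes> b) \<otimes> (a [^] (2::nat) \<otimes> b)) =
      (a [^] (2::nat) \<otimes> b) \<otimes> (a [^] (2::nat) \<otimes> b) \<otimes> c [^] s"
    using ph by (simp add: gh.hom_nat_pow m_assoc del: nat_pow_Suc)
  then have "c \<otimes> b [^] (2 * 3 :: nat) = b [^] (2 * 3 :: nat) \<otimes> c [^] s"
    by (simp only: BB)
  then have "b [^] (2 * 3 :: nat) \<otimes> c [^] (s ^ 3) = b [^] (2 * 3 :: nat) \<otimes> c [^] s"
    by (simp only: c_b2m)
  then have "c [^] (s ^ 3) = c [^] s" by (simp del: nat_pow_Suc)
  then have "nf 0 0 (s ^ 3) = nf 0 0 s" by (simp add: nf_def)
  then show False using s3_mod by (simp add: nf_eq_iff)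
qed


lemma c_a2: "c \<otimes> a [^] (2::nat) = a [^] (2::nat) \<otimes> b [^] (2 * 2 :: nat) \<otimes> c"
proof -
  have "c \<otimes> a [^] (2::nat) = (c \<otimes> a) \<otimes> a" by (simp only: a2 m_assoc cl)
  also have "\<dots> = a \<otimes> (b [^] (2 * 1 :: nat) \<otimes> (c \<otimes> a))" by (simp only: F3 m_assoc cl) simp
  also have "\<dots> = a \<otimes> ((b [^] (2 * 1 :: nat) \<otimes> a) \<otimes> (b [^] (2 :: nat) \<otimes> c))" by (simp only: F3 m_assoc cl)
  also have "\<dots> = a \<otimes> (a \<otimes> (b [^] (2 + 2 :: nat) \<otimes> c))"
    by (simp only: b2m_a m_assoc cl) (simp add: nat_pow_mult[symmetric] m_assoc del: nat_pow_Suc)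
  also have "\<dots> = a [^] (2::nat) \<otimes> b [^] (2 * 2 :: nat) \<otimes> c" by (simp add: a2 m_assoc)
  finally show ?thesis .
qed

lemma a2bc: "(a [^] (2::nat) \<otimes> b \<otimes> c) \<otimes> (a [^] (2::nat) \<otimes> b \<otimes> c) = \<one>"
proof -
  have e1: "b \<otimes> (c \<otimes> a [^] (2::nat)) = a [^] (2::nat) \<otimes> b \<otimes> c"
  proof -
    have "b \<otimes> (c \<otimes> a [^] (2::nat)) = (b \<otimes> a [^] (2::nat)) \<otimes> (b [^] (4::nat) \<otimes> c)"
      using c_a2 by (simp add: m_assoc)
    also have "\<dots> = a [^] (2::nat) \<otimes> (b [^] (5 + 4 :: nat) \<otimes> c)"
      by (simp only: b_a2 m_assoc cl)
    also have "b [^] (5 + 4 :: nat) = b" using bmod[of 9] by simp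
    finally show ?thesis by (simp add: m_assoc)
  qed
  have "(a [^] (2::nat) \<otimes> b \<otimes> c) \<otimes> (a [^] (2::nat) \<otimes> b \<otimes> c) =
        a [^] (2::nat) \<otimes> ((b \<otimes> (c \<otimes> a [^] (2::nat))) \<otimes> (b \<otimes> c))"
    by (simp add: m_assoc)
  also have "\<dots> = a [^] (2 + 2 :: nat) \<otimes> (b \<otimes> c \<otimes> (b \<otimes> c))"
    by (simp only: e1 m_assoc cl)
  also have "\<dots> = \<one>" using R1 R5 by (simp add: m_assoc)
  finally show ?thesis .
qed

lemma BB8: "(a [^] (2::nat) \<otimes> b) [^] (2 * m :: nat) = b [^] (6 * m)"
proof -
  have "(a [^] (2::nat) \<otimes> b) [^] (2 * m :: nat) = ((a [^] (2::nat) \<otimes> b) [^] (2::nat)) [^] m"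
    by (simp add: nat_pow_pow)
  also have "(a [^] (2::nat) \<otimes> b) [^] (2::nat) = b [^] (6::nat)"
    using BB by (simp add: numeral_2_eq_2)
  finally show ?thesis by (simp add: nat_pow_pow)
qed

lemma ia_cancel: "z \<in> carrier G \<Longrightarrow> inv a \<otimes> (a \<otimes> z) = z"
  by (simp add: m_assoc[symmetric])

lemma ia2_cancel: "inv a [^] (2::nat) \<otimes> (a [^] (2::nat) \<otimes> b) = b"
  by (simp add: nat_pow_inv m_assoc[symmetric])

lemma G1: "inv a [^] (4::nat) = \<one>" by (simp add: nat_pow_inv R1)

lemma G2: "(a [^] (2::nat) \<otimes> b) [^] (8::nat) = \<one>"
  using BB8[of 4] bmod[of 24] by simp

lemma G4: "inv a \<otimes> (a [^] (2::nat) \<otimes> b) \<otimes> inv a \<otimes> (a [^] (2::nat) \<otimes> b) = \<one>"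
  using R4 by (simp add: a2 m_assoc ia_cancel)

lemma G5: "(a [^] (2::nat) \<otimes> b) \<otimes> c \<otimes> (a [^] (2::nat) \<otimes> b) \<otimes> c = \<one>"
  using a2bc by (simp add: m_assoc)

lemma G6: "inv a \<otimes> (a [^] (2::nat) \<otimes> b) \<otimes> c \<otimes> inv a \<otimes> (a [^] (2::nat) \<otimes> b) \<otimes> c = \<one>"
  using R6 by (simp add: a2 m_assoc ia_cancel)

lemma G7: "(a [^] (2::nat) \<otimes> b) \<otimes> (a [^] (2::nat) \<otimes> b) \<otimes> inv a = inv a \<otimes> (a [^] (2::nat) \<otimes> b) \<otimes> (a [^] (2::nat) \<otimes> b)"
proof -
  have "(a [^] (2::nat) \<otimes> b) \<otimes> (a [^] (2::nat) \<otimes> b) \<otimes> inv a = b [^] (6::nat) \<otimes> a [^] (3::nat)"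
    using BB by (simp add: inv_a del: nat_pow_Suc)
  also have "\<dots> = a [^] (3::nat) \<otimes> b [^] (6::nat)" by (rule b6)
  also have "\<dots> = inv a \<otimes> ((a [^] (2::nat) \<otimes> b) \<otimes> (a [^] (2::nat) \<otimes> b))"
    using BB by (simp add: inv_a del: nat_pow_Suc)
  finally show ?thesis by (simp add: m_assoc)
qed

lemma c_s3: "c [^] (s ^ 3) = c [^] s \<otimes> c [^] (8 * w)"
proof -
  define t where "t = u * (1 + 4 * w * u) * (1 + 2 * w * u)"
  have e: "s ^ 3 = s + 8 * w * t" using s3_eq by (simp only: t_def)
  have "c [^] (s ^ 3) = c [^] (s + 8 * w * t)" by (simp only: e)
  also have "\<dots> = c [^] s \<otimes> c [^] (8 * w * t)" by (rule nat_pow_mult[symmetric, OF c])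
  also have "c [^] (8 * w * t) = c [^] (8 * w)"
  proof -
    have "odd t" unfolding t_def by (rule t_odd)
    then have m: "(8 * w * t) mod n = 8 * w" by (rule odd_mult_mod)
    show ?thesis by (metis cmod m)
  qed
  finally show ?thesis .
qed

lemma dvd_pow2_less:
  fixes d :: nat
  assumes "d dvd 2 ^ Suc m" "d \<noteq> 2 ^ Suc m"
  shows "d dvd 2 ^ m"
proof -
  obtain i where i: "i \<le> Suc m" "d = 2 ^ i"
    using assms(1) divides_primepow_nat[OF two_is_prime_nat] by blast
  then have "i \<le> m" using assms(2) by (cases "i = Suc m") auto
  then show ?thesis using i by (simp add: le_imp_power_dvd)
qed

lemma dvd_pow2_even:
  fixes d :: nat
  assumes "d dvd 2 ^ m" "d \<noteq> 1"
  shows "even d"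
proof -
  obtain i where i: "i \<le> m" "d = 2 ^ i"
    using assms(1) divides_primepow_nat[OF two_is_prime_nat] by blast
  then have "i \<noteq> 0" using assms(2) by auto
  then show ?thesis using i by simp
qed

end

context L2i
begin

lemma no_tight_quotient:
  assumes univ: "\<And>(H :: 'a set monoid) x y z. group H \<Longrightarrow> x \<in> carrier H \<Longrightarrow> y \<in> carrier H \<Longrightarrow> z \<in> carrier H \<Longrightarrow>
      x [^]\<^bsub>H\<^esub> (4::nat) = \<one>\<^bsub>H\<^esub> \<Longrightarrow> y [^]\<^bsub>H\<^esub> (8::nat) = \<one>\<^bsub>H\<^esub> \<Longrightarrow> z [^]\<^bsub>H\<^esub> (16 * w) = \<one>\<^bsub>H\<^esub> \<Longrightarrow>
      x \<otimes>\<^bsub>H\<^esub> y \<otimes>\<^bsub>H\<^esub> x \<otimes>\<^bsub>H\<^esub> y = \<one>\<^bsub>H\<^esub> \<Longrightarrow> y \<otimes>\<^bsub>H\<^esub> z \<otimes>\<^bsub>H\<^esub> y \<otimes>\<^bsub>H\<^esub> z = \<one>\<^bsub>H\<^esub> \<Longrightarrow>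
      x \<otimes>\<^bsub>H\<^esub> y \<otimes>\<^bsub>H\<^esub> z \<otimes>\<^bsub>H\<^esub> x \<otimes>\<^bsub>H\<^esub> y \<otimes>\<^bsub>H\<^esub> z = \<one>\<^bsub>H\<^esub> \<Longrightarrow>
      y \<otimes>\<^bsub>H\<^esub> y \<otimes>\<^bsub>H\<^esub> x = x \<otimes>\<^bsub>H\<^esub> y \<otimes>\<^bsub>H\<^esub> y \<Longrightarrow>
      z \<otimes>\<^bsub>H\<^esub> y \<otimes>\<^bsub>H\<^esub> y = y \<otimes>\<^bsub>H\<^esub> y \<otimes>\<^bsub>H\<^esub> z [^]\<^bsub>H\<^esub> (1 + 4 * w * u) \<Longrightarrow>
      \<exists>\<psi> \<in> hom G H. \<psi> a = x \<and> \<psi> b = y \<and> \<psi> c = z"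
    and NG: "N \<lhd> G" and N1: "N \<noteq> {\<one>}"
    and T: "tight_chiral4 (G Mod N) (N #> a) (N #> b) (N #> c)"
  shows False
proof -
  interpret N: normal N G by (rule NG)
  define Q where "Q = G Mod N"
  interpret Q: group Q unfolding Q_def by (rule N.factorgroup_is_group)
  define cs where "cs x = N #> x" for x
  have cs_carrier: "x \<in> carrier G \<Longrightarrow> cs x \<in> carrier Q" for x
    by (auto simp: cs_def Q_def carrier_FactGroup)
  have cs_mult: "x \<in> carrier G \<Longrightarrow> y \<in> carrier G \<Longrightarrow> cs x \<otimes>\<^bsub>Q\<^esub> cs y = cs (x \<otimes> y)" for x y
    by (simp add: cs_def Q_def N.rcos_sum)
  have cs_pow: "x \<in> carrier G \<Longrightarrow> cs x [^]\<^bsub>Q\<^esub> (k::nat) = cs (x [^] k)" for x k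
    by (simp add: cs_def Q_def N.FactGroup_pow)
  have Q1: "\<one>\<^bsub>Q\<^esub> = N" by (simp add: Q_def)
  have cs_one: "x \<in> carrier G \<Longrightarrow> cs x = \<one>\<^bsub>Q\<^esub> \<longleftrightarrow> x \<in> N" for x
  proof
    assume "x \<in> carrier G" "cs x = \<one>\<^bsub>Q\<^esub>"
    then show "x \<in> N" using rcos_self[of x N] N.subgroup_axioms by (simp add: cs_def Q1)
  next
    assume "x \<in> carrier G" "x \<in> N"
    then show "cs x = \<one>\<^bsub>Q\<^esub>" using N.rcos_const[OF is_group] by (simp add: cs_def Q1)
  qed
  have cs_inv: "x \<in> carrier G \<Longrightarrow> inv\<^bsub>Q\<^esub> (cs x) = cs (inv x)" for x
    using N.inv_FactGroup[of "N #> x"] N.rcos_inv[of x] cs_carrier[of x]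
    by (simp add: cs_def Q_def)
  have cs_eq: "x \<in> carrier G \<Longrightarrow> y \<in> carrier G \<Longrightarrow> x \<otimes> inv y \<in> N \<Longrightarrow> cs x = cs y" for x y
  proof -
    assume x: "x \<in> carrier G" and y: "y \<in> carrier G" and h: "x \<otimes> inv y \<in> N"
    have "x = (x \<otimes> inv y) \<otimes> y" using x y by (simp add: m_assoc)
    then have "cs x = (N #> (x \<otimes> inv y)) #> y" using coset_mult_assoc[of N "x \<otimes> inv y" y] x y N.subset
      by (simp add: cs_def)
    also have "N #> (x \<otimes> inv y) = N" using N.rcos_const[OF is_group h] .
    finally show "cs x = cs y" by (simp add: cs_def)
  qed
  have Nc: "x \<in> N \<Longrightarrow> x \<in> carrier G" for x using N.subset by auto
  have Nconj: "g \<in> carrier G \<Longrightarrow> x \<in> N \<Longrightarrow> g \<otimes> x \<otimes> inv g \<in> N" for g x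
    by (rule N.inv_op_closed2)

  define da where "da = Q.ord (cs a)"
  define db where "db = Q.ord (cs b)"
  define dc where "dc = Q.ord (cs c)"
  have powN: "x \<in> carrier G \<Longrightarrow> x [^] (k::nat) \<in> N \<longleftrightarrow> Q.ord (cs x) dvd k" for x k
    using Q.pow_eq_id[OF cs_carrier, of x k] cs_pow[of x k] cs_one[of "x [^] k"] by simp
  have da4: "da dvd 4" using powN[of a 4] R1 N.one_closed by (simp add: da_def)
  have db8: "db dvd 8" using powN[of b 8] R2 N.one_closed by (simp add: db_def)
  have dcn: "dc dvd n" using powN[of c n] R3 N.one_closed by (simp add: dc_def)
  have da0: "0 < da" "da \<le> 4" using da4 by (auto intro: dvd_imp_le Nat.gr0I)
  have db0: "0 < db" "db \<le> 8" using db8 by (auto intro: dvd_imp_le Nat.gr0I)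
  have dc0: "0 < dc" "dc \<le> n" using dcn w by (auto intro: dvd_imp_le Nat.gr0I)

  have TC: "chiral4 Q (cs a) (cs b) (cs c)" and Tord: "order Q = da * db * dc"
    using T by (simp_all add: tight_chiral4_def Q_def cs_def da_def db_def dc_def)
  have cbne: "cs b \<noteq> \<one>\<^bsub>Q\<^esub>" using TC by (simp add: chiral4_def rot_group4_def)
  have db1: "db \<noteq> 1" using cbne powN[of b 1] cs_one[of b] by (auto simp: db_def)
  have db_even: "even db" using dvd_pow2_even[of db 3] db8 db1 by simp
  have lag: "card (rcosets N) * card N = order G" by (rule lagrange[OF N.subgroup_axioms])
  have cQ: "order Q = card (rcosets N)" by (simp add: order_def Q_def FactGroup_def)
  have cardN: "da * db * dc * card N = 32 * n" using lag cQ Tord order_G by simp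

  \<comment> \<open>N is the product of its intersections with the cyclic subgroups\<close>
  define I where "I = {i. i < 4 \<and> da dvd i} \<times> {j. j < 8 \<and> db dvd j} \<times> {k. k < n \<and> dc dvd k}"
  define P where "P = (\<lambda>(i, j, k). nf i j k) ` I"
  have I_sub: "I \<subseteq> {..<4} \<times> {..<8} \<times> {..<n}" by (auto simp: I_def)
  have cardm: "d dvd m \<Longrightarrow> 0 < d \<Longrightarrow> card {i. i < m \<and> d dvd i} = m div d" for d m :: nat
  proof -
    assume dm: "d dvd m" and d0: "0 < d"
    have "{i. i < m \<and> d dvd i} = (\<lambda>t. d * t) ` {..<m div d}"
    proof
      show "{i. i < m \<and> d dvd i} \<subseteq> (\<lambda>t. d * t) ` {..<m div d}"
      proof
        fix i assume "i \<in> {i. i < m \<and> d dvd i}"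
        then obtain t where "i = d * t" "d * t < m" by (auto elim: dvdE)
        moreover have "t < m div d" using calculation dm d0
          by (metis dvd_mult_div_cancel mult_less_cancel1)
        ultimately show "i \<in> (\<lambda>t. d * t) ` {..<m div d}" by auto
      qed
      show "(\<lambda>t. d * t) ` {..<m div d} \<subseteq> {i. i < m \<and> d dvd i}"
      proof
        fix i assume "i \<in> (\<lambda>t. d * t) ` {..<m div d}"
        then obtain t where t: "i = d * t" "t < m div d" by auto
        then have "d * t < d * (m div d)" using d0 by simp
        then show "i \<in> {i. i < m \<and> d dvd i}" using t dm by (simp add: dvd_mult_div_cancel)
      qed
    qed
    moreover have "inj_on (\<lambda>t. d * t) {..<m div d}" using d0 by (auto simp: inj_on_def)
    ultimately show ?thesis by (simp add: card_image)
  qed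
  have cardI: "card I = (4 div da) * (8 div db) * (n div dc)"
    unfolding I_def using cardm[OF da4 da0(1)] cardm[OF db8 db0(1)] cardm[OF dcn dc0(1)]
    by (simp add: card_cartesian_product)
  have cardP: "card P = card I" unfolding P_def
    by (rule card_image) (rule inj_on_subset[OF inj_nf I_sub])
  have P_N: "P \<subseteq> N"
  proof
    fix x assume "x \<in> P"
    then obtain i j k where x: "x = nf i j k" and ijk: "da dvd i" "db dvd j" "dc dvd k"
      by (auto simp: P_def I_def)
    have "a [^] i \<in> N" "b [^] j \<in> N" "c [^] k \<in> N"
      using powN ijk by (simp_all add: da_def db_def dc_def)
    then show "x \<in> N" by (simp add: x nf_def N.m_closed)
  qed
  have "card P * (da * db * dc) = 32 * n"
  proof -
    have "card P * (da * db * dc) = ((4 div da) * da) * ((8 div db) * db) * ((n div dc) * dc)"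
      using cardP cardI by (simp add: ac_simps)
    also have "\<dots> = 4 * 8 * n" using da4 db8 dcn by simp
    finally show ?thesis by simp
  qed
  then have "card P * (da * db * dc) = card N * (da * db * dc)" using cardN by (simp add: ac_simps)
  moreover have "da * db * dc \<noteq> 0" using da0 db0 dc0 by simp
  ultimately have "card P = card N" by simp
  moreover have "finite N" using finite_G N.subset finite_subset by blast
  ultimately have PN: "P = N" using P_N by (simp add: card_subset_eq)
  have memN: "i < 4 \<Longrightarrow> j < 8 \<Longrightarrow> k < n \<Longrightarrow> nf i j k \<in> N \<Longrightarrow> da dvd i \<and> db dvd j \<and> dc dvd k" for i j k
  proof -
    assume ijk: "i < 4" "j < 8" "k < n" "nf i j k \<in> N"
    then obtain i' j' k' where "(i', j', k') \<in> I" "nf i j k = nf i' j' k'" using PN by (auto simp: P_def)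
    then show ?thesis using inj[of i j k i' j' k'] ijk by (auto simp: I_def)
  qed

  \<comment> \<open>the central involution lies in N\<close>
  have b4c: "b [^] (4::nat) \<in> N \<Longrightarrow> c [^] (8 * w) \<in> N"
  proof -
    assume b4: "b [^] (4::nat) \<in> N"
    have "c \<otimes> b [^] (2 * 2 :: nat) \<otimes> inv c \<in> N" using Nconj[OF c] b4 by simp
    also have "c \<otimes> b [^] (2 * 2 :: nat) \<otimes> inv c = b [^] (4::nat) \<otimes> c [^] (s ^ 2 + (n - 1))"
      by (simp only: c_b2m inv_c m_assoc nat_pow_mult cl) simp
    also have "\<dots> = nf 0 4 (s ^ 2 + n - 1)" using w by (simp add: nf_def)
    also have "\<dots> = nf 0 4 (8 * w)" using nf_mod[of 0 4 "s ^ 2 + n - 1"] s2_mod by simp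
    finally have "nf 0 4 (8 * w) \<in> N" .
    then have "dc dvd 8 * w" using memN[of 0 4 "8 * w"] w by simp
    then show ?thesis using powN[of c "8 * w"] by (simp add: dc_def)
  qed
  have a2b: "a [^] (2::nat) \<in> N \<Longrightarrow> b [^] (4::nat) \<in> N"
  proof -
    assume a2N: "a [^] (2::nat) \<in> N"
    have "c \<otimes> a [^] (2::nat) \<otimes> inv c \<in> N" using Nconj[OF c] a2N by simp
    also have "c \<otimes> a [^] (2::nat) \<otimes> inv c = nf 2 4 0"
      by (simp add: c_a2 nf_def m_assoc)
    finally have "db dvd 4" using memN[of 2 4 0] w by simp
    then show ?thesis using powN[of b 4] by (simp add: db_def)
  qed
  have zN: "c [^] (8 * w) \<in> N"
  proof -
    obtain x where x: "x \<in> N" "x \<noteq> \<one>" using N1 N.one_closed by blast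
    then obtain i j k where "(i, j, k) \<in> I" and xe: "x = nf i j k" using PN by (auto simp: P_def)
    then have ijk: "i < 4" "j < 8" "k < n" "da dvd i" "db dvd j" "dc dvd k" by (auto simp: I_def)
    have "i \<noteq> 0 \<or> j \<noteq> 0 \<or> k \<noteq> 0"
    proof (rule ccontr)
      assume "\<not> (i \<noteq> 0 \<or> j \<noteq> 0 \<or> k \<noteq> 0)"
      then have "x = nf 0 0 0" using xe by simp
      then show False using x by (simp add: nf_def)
    qed
    then consider "i \<noteq> 0" | "j \<noteq> 0" | "k \<noteq> 0" by blast
    then show ?thesis
    proof cases
      case 1
      then have "da \<le> i" using ijk by (auto intro: dvd_imp_le)
      then have "da dvd 2" using da4 ijk(1) dvd_pow2_less[of da 1] by simp
      then have "a [^] (2::nat) \<in> N" using powN[of a 2] by (simp add: da_def)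
      then show ?thesis using a2b b4c by blast
    next
      case 2
      then have "db \<le> j" using ijk by (auto intro: dvd_imp_le)
      then have "db dvd 4" using db8 ijk(2) dvd_pow2_less[of db 2] by simp
      then have "b [^] (4::nat) \<in> N" using powN[of b 4] by (simp add: db_def)
      then show ?thesis using b4c by blast
    next
      case 3
      then have "dc \<le> k" using ijk by (auto intro: dvd_imp_le)
      then have dcn': "dc \<noteq> n" using ijk by simp
      obtain e where e: "w = 2 ^ e" using w2 by blast
      have "dc dvd 2 ^ Suc (e + 3)" using dcn e by (simp add: power_add)
      moreover have "dc \<noteq> 2 ^ Suc (e + 3)" using dcn' e by (simp add: power_add)
      ultimately have "dc dvd 2 ^ (e + 3)" by (rule dvd_pow2_less)
      then have "dc dvd 8 * w" using e by (simp add: power_add mult.commute)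
      then show ?thesis using powN[of c "8 * w"] by (simp add: dc_def)
    qed
  qed
  \<comment> \<open>the would-be automorphism\<close>
  define y0 where "y0 = a [^] (2::nat) \<otimes> b"
  have y0c: "y0 \<in> carrier G" by (simp add: y0_def)
  have csm: "\<And>x y. x \<in> carrier G \<Longrightarrow> y \<in> carrier G \<Longrightarrow> cs x \<otimes>\<^bsub>Q\<^esub> cs y = cs (x \<otimes> y)" by (rule cs_mult)
  have csone: "cs \<one> = \<one>\<^bsub>Q\<^esub>" using cs_one[of \<one>] N.one_closed by simp
  have rel8: "cs c \<otimes>\<^bsub>Q\<^esub> cs y0 \<otimes>\<^bsub>Q\<^esub> cs y0 = cs y0 \<otimes>\<^bsub>Q\<^esub> cs y0 \<otimes>\<^bsub>Q\<^esub> cs c [^]\<^bsub>Q\<^esub> s"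
  proof -
    have "cs c \<otimes>\<^bsub>Q\<^esub> cs y0 \<otimes>\<^bsub>Q\<^esub> cs y0 = cs (c \<otimes> (y0 \<otimes> y0))" by (simp add: csm y0c m_assoc)
    also have "c \<otimes> (y0 \<otimes> y0) = b [^] (2 * 3 :: nat) \<otimes> c [^] (s ^ 3)"
      by (simp only: y0_def BB c_b2m)
    also have "\<dots> = (b [^] (2 * 3 :: nat) \<otimes> c [^] s) \<otimes> c [^] (8 * w)" by (simp only: c_s3 m_assoc cl)
    also have "cs \<dots> = cs (b [^] (2 * 3 :: nat) \<otimes> c [^] s)"
    proof (rule cs_eq)
      define g where "g = b [^] (2 * 3 :: nat) \<otimes> c [^] s"
      have gc: "g \<in> carrier G" by (simp add: g_def)
      show "b [^] (2 * 3 :: nat) \<otimes> c [^] s \<otimes> c [^] (8 * w) \<otimes> inv (b [^] (2 * 3 :: nat) \<otimes> c [^] s) \<in> N"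
        using Nconj[OF gc zN] by (simp add: g_def)
    qed simp_all
    also have "b [^] (2 * 3 :: nat) \<otimes> c [^] s = y0 \<otimes> y0 \<otimes> c [^] s" by (simp only: y0_def BB)
    also have "cs \<dots> = cs y0 \<otimes>\<^bsub>Q\<^esub> cs y0 \<otimes>\<^bsub>Q\<^esub> cs c [^]\<^bsub>Q\<^esub> s" by (simp add: csm cs_pow y0c)
    finally show ?thesis .
  qed
  obtain \<psi> where psi: "\<psi> \<in> hom G Q" "\<psi> a = cs (inv a)" "\<psi> b = cs y0" "\<psi> c = cs c"
  proof -
    have "\<exists>\<psi> \<in> hom G Q. \<psi> a = cs (inv a) \<and> \<psi> b = cs y0 \<and> \<psi> c = cs c"
    proof (rule univ[unfolded Q_def[symmetric]])
      show "group Q" by (rule Q.is_group)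
      show "cs (inv a) \<in> carrier Q" "cs y0 \<in> carrier Q" "cs c \<in> carrier Q" by (simp_all add: cs_carrier y0c)
      show "cs (inv a) [^]\<^bsub>Q\<^esub> (4::nat) = \<one>\<^bsub>Q\<^esub>" by (simp add: cs_pow G1 csone)
      show "cs y0 [^]\<^bsub>Q\<^esub> (8::nat) = \<one>\<^bsub>Q\<^esub>" by (simp add: cs_pow y0c y0_def G2 csone)
      show "cs c [^]\<^bsub>Q\<^esub> (16 * w) = \<one>\<^bsub>Q\<^esub>" by (simp add: cs_pow R3 csone)
      show "cs (inv a) \<otimes>\<^bsub>Q\<^esub> cs y0 \<otimes>\<^bsub>Q\<^esub> cs (inv a) \<otimes>\<^bsub>Q\<^esub> cs y0 = \<one>\<^bsub>Q\<^esub>"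
        by (simp add: csm y0c) (simp add: y0_def G4 csone)
      show "cs y0 \<otimes>\<^bsub>Q\<^esub> cs c \<otimes>\<^bsub>Q\<^esub> cs y0 \<otimes>\<^bsub>Q\<^esub> cs c = \<one>\<^bsub>Q\<^esub>"
        by (simp add: csm y0c) (simp add: y0_def G5 csone)
      show "cs (inv a) \<otimes>\<^bsub>Q\<^esub> cs y0 \<otimes>\<^bsub>Q\<^esub> cs c \<otimes>\<^bsub>Q\<^esub> cs (inv a) \<otimes>\<^bsub>Q\<^esub> cs y0 \<otimes>\<^bsub>Q\<^esub> cs c = \<one>\<^bsub>Q\<^esub>"
        by (simp add: csm y0c) (simp add: y0_def G6 csone)
      show "cs y0 \<otimes>\<^bsub>Q\<^esub> cs y0 \<otimes>\<^bsub>Q\<^esub> cs (inv a) = cs (inv a) \<otimes>\<^bsub>Q\<^esub> cs y0 \<otimes>\<^bsub>Q\<^esub> cs y0"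
        by (simp add: csm y0c) (simp add: y0_def G7)
      show "cs c \<otimes>\<^bsub>Q\<^esub> cs y0 \<otimes>\<^bsub>Q\<^esub> cs y0 = cs y0 \<otimes>\<^bsub>Q\<^esub> cs y0 \<otimes>\<^bsub>Q\<^esub> cs c [^]\<^bsub>Q\<^esub> (1 + 4 * w * u)"
        by (rule rel8)
    qed
    then show ?thesis using that by blast
  qed
  interpret psi: group_hom G Q \<psi> by unfold_locales (rule psi(1))
  have psi_pow: "x \<in> carrier G \<Longrightarrow> \<psi> (x [^] (k::nat)) = \<psi> x [^]\<^bsub>Q\<^esub> k" for x k
    by (rule psi.hom_nat_pow)
  have psi_nf: "\<psi> (nf i j k) = cs (inv a [^] i \<otimes> y0 [^] j \<otimes> c [^] k)" for i j k
    by (simp add: nf_def psi psi_pow cs_pow csm y0c)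
  have psiN: "h \<in> N \<Longrightarrow> \<psi> h = \<one>\<^bsub>Q\<^esub>" for h
  proof -
    assume "h \<in> N"
    then obtain i j k where h: "h = nf i j k" and ijk: "da dvd i" "db dvd j" "dc dvd k"
      using PN by (auto simp: P_def I_def)
    have "even j" using db_even ijk(2) by (auto elim: dvd_trans)
    then obtain m where j: "j = 2 * m" by blast
    have d2: "db dvd 2 * m" using ijk(2) j by simp
    have "db dvd 3 * (2 * m)" by (rule dvd_mult[OF d2])
    moreover have "3 * (2 * m) = 6 * (m::nat)" by simp
    ultimately have "db dvd 6 * m" by simp
    then have b6m: "b [^] (6 * m) \<in> N" using powN[of b "6 * m"] by (simp add: db_def)
    have ai: "a [^] i \<in> N" using powN[of a i] ijk by (simp add: da_def)
    have ck: "c [^] k \<in> N" using powN[of c k] ijk by (simp add: dc_def)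
    have "inv a [^] i \<otimes> y0 [^] j \<otimes> c [^] k = inv (a [^] i) \<otimes> b [^] (6 * m) \<otimes> c [^] k"
      by (simp add: nat_pow_inv j y0_def BB8)
    also have "\<dots> \<in> N" using ai b6m ck by (simp add: N.m_closed N.m_inv_closed)
    finally show ?thesis using psi_nf cs_one by (simp add: h)
  qed
  define \<Phi> where "\<Phi> Y = \<psi> (SOME x. x \<in> Y)" for Y
  have Phi_cs: "x \<in> carrier G \<Longrightarrow> \<Phi> (cs x) = \<psi> x" for x
  proof -
    assume x: "x \<in> carrier G"
    have "x \<in> cs x" using rcos_self[OF x N.subgroup_axioms] by (simp add: cs_def)
    then have "(SOME y. y \<in> cs x) \<in> cs x" by (rule someI)
    then obtain h where h: "h \<in> N" "(SOME y. y \<in> cs x) = h \<otimes> x"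
      by (auto simp: cs_def r_coset_def)
    have "\<Phi> (cs x) = \<psi> h \<otimes>\<^bsub>Q\<^esub> \<psi> x" using h x Nc by (simp add: \<Phi>_def)
    also have "\<dots> = \<psi> x" using psiN[OF h(1)] x by simp
    finally show ?thesis .
  qed
  have carrQ: "Y \<in> carrier Q \<Longrightarrow> \<exists>x \<in> carrier G. Y = cs x" for Y
    by (auto simp: Q_def carrier_FactGroup cs_def)
  have Phi_hom: "\<Phi> \<in> hom Q Q"
  proof (rule homI)
    fix Y assume "Y \<in> carrier Q"
    then obtain x where "x \<in> carrier G" "Y = cs x" using carrQ by blast
    then show "\<Phi> Y \<in> carrier Q" by (simp add: Phi_cs)
  next
    fix Y Z assume "Y \<in> carrier Q" "Z \<in> carrier Q"
    then obtain x y where "x \<in> carrier G" "Y = cs x" "y \<in> carrier G" "Z = cs y" using carrQ by blast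
    then show "\<Phi> (Y \<otimes>\<^bsub>Q\<^esub> Z) = \<Phi> Y \<otimes>\<^bsub>Q\<^esub> \<Phi> Z" by (simp add: csm Phi_cs)
  qed
  interpret Phi: group_hom Q Q \<Phi> by unfold_locales (rule Phi_hom)
  have Pa: "\<Phi> (\<psi> a) = cs a"
    using Phi_cs[of "inv a"] psi cs_inv[of "inv a"] by simp
  have Pb: "\<Phi> (\<psi> b) = cs b"
  proof -
    have "\<Phi> (\<psi> b) = \<psi> y0" using Phi_cs[OF y0c] psi by simp
    also have "\<dots> = cs (inv a [^] (2::nat) \<otimes> (a [^] (2::nat) \<otimes> b))"
      by (simp add: y0_def psi psi_pow cs_pow csm)
    also have "\<dots> = cs b" by (simp only: ia2_cancel)
    finally show ?thesis .
  qed
  have Pc: "\<Phi> (\<psi> c) = cs c" using Phi_cs[of c] psi by simp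
  have PP: "Y \<in> carrier Q \<Longrightarrow> \<Phi> (\<Phi> Y) = Y" for Y
  proof -
    assume "Y \<in> carrier Q"
    then obtain x where x: "x \<in> carrier G" "Y = cs x" using carrQ by blast
    then obtain i j k where xe: "x = nf i j k" using carrier_NF by (auto simp: NF_def)
    have "\<Phi> (\<Phi> Y) = \<Phi> (\<psi> (nf i j k))" using x xe by (simp add: Phi_cs)
    also have "\<psi> (nf i j k) = \<psi> a [^]\<^bsub>Q\<^esub> i \<otimes>\<^bsub>Q\<^esub> \<psi> b [^]\<^bsub>Q\<^esub> j \<otimes>\<^bsub>Q\<^esub> \<psi> c [^]\<^bsub>Q\<^esub> k"
      by (simp add: nf_def psi_pow)
    also have "\<Phi> \<dots> = \<Phi> (\<psi> a) [^]\<^bsub>Q\<^esub> i \<otimes>\<^bsub>Q\<^esub> \<Phi> (\<psi> b) [^]\<^bsub>Q\<^esub> j \<otimes>\<^bsub>Q\<^esub> \<Phi> (\<psi> c) [^]\<^bsub>Q\<^esub> k"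
      by (simp add: Phi.hom_nat_pow)
    also have "\<dots> = cs (nf i j k)" by (simp add: Pa Pb Pc cs_pow csm nf_def)
    finally show ?thesis using x xe by simp
  qed
  have "bij_betw \<Phi> (carrier Q) (carrier Q)"
    by (rule bij_betw_byWitness[where f' = \<Phi>]) (auto simp: PP)
  then have "\<Phi> \<in> iso Q Q" using Phi_hom by (simp add: iso_def)
  moreover have "\<Phi> (cs a) = inv\<^bsub>Q\<^esub> (cs a)" using Phi_cs[of a] psi cs_inv[of a] by simp
  moreover have "\<Phi> (cs b) = cs a \<otimes>\<^bsub>Q\<^esub> cs a \<otimes>\<^bsub>Q\<^esub> cs b"
    using Phi_cs[of b] psi by (simp add: csm y0_def aab)
  moreover have "\<Phi> (cs c) = cs c" using Phi_cs[of c] psi by simp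
  ultimately show False using TC by (auto simp: chiral4_def)
qed

end

locale mdl =
  fixes \<beta> :: nat and \<epsilon> :: int
  assumes beta: "5 \<le> \<beta>" and eps: "\<epsilon> = 1 \<or> \<epsilon> = -1"
begin

abbreviation q :: int where "q \<equiv> 2 ^ (\<beta> - 2)"
abbreviation M :: int where "M \<equiv> 2 ^ \<beta>"

lemma M_q: "M = 4 * q"
proof -
  have e: "\<beta> - 2 + 2 = \<beta>" using beta by simp
  have "M = 2 ^ (\<beta> - 2 + 2)" by (simp only: e)
  also have "\<dots> = 2 ^ (\<beta> - 2) * 2 ^ 2" by (rule power_add)
  finally show ?thesis by simp
qed

lemma q8: "8 dvd q"
proof -
  have e: "3 + (\<beta> - 5) = \<beta> - 2" using beta by simp
  have "q = 2 ^ (3 + (\<beta> - 5))" by (simp only: e)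
  also have "\<dots> = 2 ^ 3 * 2 ^ (\<beta> - 5)" by (rule power_add)
  finally show ?thesis by simp
qed

lemma q_pos: "0 < q" by simp

definition de :: "int \<Rightarrow> int" where
  "de r = (if r = 0 then 0 else if r = 1 then 0 else if r = 2 then \<epsilon> else if r = 3 then - \<epsilon>
          else if r = 4 then 2 else if r = 5 then 2 else if r = 6 then 2 + \<epsilon> else 2 - \<epsilon>)"

definition D :: "int \<Rightarrow> int" where "D k = q * de (k mod 8)"

definition act :: "gen3 \<times> bool \<Rightarrow> int \<Rightarrow> int" where
  "act p k = (case p of
      (S1, False) \<Rightarrow> k + D k | (S1, True) \<Rightarrow> k - D k
    | (S2, False) \<Rightarrow> - k + D k | (S2, True) \<Rightarrow> - k + D (- k)
    | (S3, False) \<Rightarrow> k + 1 | (S3, True) \<Rightarrow> k - 1)"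

definition pev :: "(gen3 \<times> bool) list \<Rightarrow> int \<Rightarrow> int" where
  "pev w k = fold act w k"

definition cg :: "int \<Rightarrow> int \<Rightarrow> bool" where "cg x y \<longleftrightarrow> M dvd (x - y)"

lemma cg_refl [simp]: "cg x x" by (simp add: cg_def)
lemma cg_sym: "cg x y \<Longrightarrow> cg y x" unfolding cg_def by (metis dvd_minus_iff minus_diff_eq)
lemma cg_trans: "cg x y \<Longrightarrow> cg y z \<Longrightarrow> cg x z"
  unfolding cg_def using dvd_add by fastforce

lemma M8: "8 dvd M" using q8 M_q by simp

lemma cg_mod8: "cg x y \<Longrightarrow> x mod 8 = y mod 8"
proof -
  assume "cg x y"
  then have "8 dvd (x - y)" using M8 by (auto simp: cg_def elim: dvd_trans)
  then show ?thesis by (simp add: mod_eq_dvd_iff)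
qed

lemma D_mod: "x mod 8 = y mod 8 \<Longrightarrow> D x = D y" by (simp add: D_def)

lemma D8: "8 dvd D k" using q8 by (simp add: D_def)

lemma D_add8: "8 dvd e \<Longrightarrow> D (x + e) = D x"
proof -
  assume "8 dvd e"
  then obtain t where t: "e = 8 * t" by (auto elim: dvdE)
  show ?thesis by (rule D_mod) (simp add: t)
qed

lemma D_shift: "D (x + D k) = D x" "D (x - D k) = D x" "D (D k + x) = D x" "D (D k - x) = D (- x)"
proof -
  have m: "8 dvd - D k" using D8 by simp
  show "D (x + D k) = D x" by (rule D_add8[OF D8])
  show "D (x - D k) = D x" using D_add8[OF m, of x] by simp
  show "D (D k + x) = D x" using D_add8[OF D8, of x] by (simp add: add.commute)
  show "D (D k - x) = D (- x)" using D_add8[OF D8, of "- x"] by (simp add: add.commute)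
qed

lemma pev_Nil [simp]: "pev [] k = k" by (simp add: pev_def)
lemma pev_Cons [simp]: "pev (p # w) k = pev w (act p k)" by (simp add: pev_def)
lemma pev_append [simp]: "pev (u @ v) k = pev v (pev u k)" by (simp add: pev_def)

lemma act_cong: "cg x y \<Longrightarrow> cg (act p x) (act p y)"
proof -
  assume h: "cg x y"
  have m: "x mod 8 = y mod 8" using cg_mod8[OF h] .
  have mm: "(- x) mod 8 = (- y) mod 8" using m by (metis mod_minus_eq)
  have Dx: "D x = D y" using D_mod[OF m] .
  have Dmx: "D (- x) = D (- y)" using D_mod[OF mm] .
  have d: "M dvd (x - y)" using h by (simp add: cg_def)
  have d': "M dvd (- x - (- y))" using d by (metis dvd_minus_iff minus_diff_eq diff_minus_eq_add add.commute uminus_add_conv_diff)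
  obtain g bb where p: "p = (g, bb)" by (cases p)
  show ?thesis
  proof (cases g)
    case S1 then show ?thesis
      using d by (cases bb) (simp_all add: p act_def Dx cg_def)
  next
    case S2 then show ?thesis
      using d' by (cases bb) (simp_all add: p act_def Dx Dmx cg_def)
  next
    case S3 then show ?thesis
      using d by (cases bb) (simp_all add: p act_def cg_def)
  qed
qed

lemma pev_cong: "cg x y \<Longrightarrow> cg (pev w x) (pev w y)"
  by (induction w arbitrary: x y) (auto simp: act_cong)

lemma act_cancel: "act (g, \<not> bb) (act (g, bb) k) = k"
proof (cases g)
  case S1 then show ?thesis by (cases bb) (simp_all add: act_def D_shift)
next
  case S2 then show ?thesis by (cases bb) (simp_all add: act_def D_shift)
next
  case S3 then show ?thesis by (cases bb) (simp_all add: act_def)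
qed


lemma cg_add: "cg x y \<Longrightarrow> cg (x + z) (y + z)" by (simp add: cg_def)
lemma cg_mult: "cg x y \<Longrightarrow> cg (z * x) (z * y)"
  unfolding cg_def by (metis dvd_mult right_diff_distrib)
lemma cg_qdvd: "4 dvd Y \<Longrightarrow> M dvd q * Y"
  using M_q by (simp add: mult_dvd_mono)

lemma mod8_cases:
  fixes r :: int
  assumes "0 \<le> r" "r < 8"
  shows "r = 0 \<or> r = 1 \<or> r = 2 \<or> r = 3 \<or> r = 4 \<or> r = 5 \<or> r = 6 \<or> r = 7"
  using assms by auto

lemma D0: "D 0 = 0" by (simp add: D_def de_def)
lemma D1: "D 1 = 0" by (simp add: D_def de_def)
lemma D2: "D 2 = \<epsilon> * q" by (simp add: D_def de_def)

lemma fin_b2_r: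
  assumes "0 \<le> r" "r < 8" shows "4 dvd (de ((- r) mod 8) - de r - \<epsilon> * r)"
  unfolding de_def using mod8_cases[OF assms] eps by (elim disjE) simp_all

lemma fin_b2: "4 dvd (de ((- x) mod 8) - de (x mod 8) - \<epsilon> * (x mod 8))"
  using fin_b2_r[of "x mod 8"] by (simp add: mod_minus_eq)


lemma fin_bc_r:
  assumes "0 \<le> r" "r < 8" shows "4 dvd (de ((1 - r) mod 8) - de r)"
  unfolding de_def using mod8_cases[OF assms] eps by (elim disjE) simp_all

lemma fin_bc: "4 dvd (de ((1 - x) mod 8) - de (x mod 8))"
  using fin_bc_r[of "x mod 8"] by (simp add: mod_diff_right_eq)

lemma fin_c8_r:
  assumes "0 \<le> r" "r < 8"
  shows "4 dvd (de ((- 1 - r) mod 8) - de ((r + 1) mod 8) - (de ((- r) mod 8) - de r) - \<epsilon>)"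
  unfolding de_def using mod8_cases[OF assms] eps by (elim disjE) simp_all

lemma fin_c8: "4 dvd (de ((- 1 - x) mod 8) - de ((x + 1) mod 8) - (de ((- x) mod 8) - de (x mod 8)) - \<epsilon>)"
proof -
  have e1: "(- 1 - x) mod 8 = (- 1 - x mod 8) mod 8" by (simp add: mod_diff_right_eq)
  have e2: "(x + 1) mod 8 = (x mod 8 + 1) mod 8" by (simp add: mod_add_left_eq)
  have e3: "(- x) mod 8 = (- (x mod 8)) mod 8" by (simp add: mod_minus_eq)
  show ?thesis using fin_c8_r[of "x mod 8"] by (simp only: e1 e2 e3)
qed

lemma four_dvd_eps_mod: "4 dvd (Z - \<epsilon> * (x mod 8)) \<Longrightarrow> 4 dvd (Z - \<epsilon> * x)"
proof -
  assume h: "4 dvd (Z - \<epsilon> * (x mod 8))"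
  have "Z - \<epsilon> * x = (Z - \<epsilon> * (x mod 8)) - 4 * (2 * \<epsilon> * (x div 8))"
    by (simp add: algebra_simps) (metis div_mult_mod_eq add.commute mult.assoc mult.commute distrib_left)
  then show ?thesis using h by (metis dvd_diff dvd_triv_left)
qed

lemma Dsh: "8 dvd e \<Longrightarrow> y = z + e \<Longrightarrow> D y = D z" using D_add8 by simp

abbreviation s :: int where "s \<equiv> 1 + \<epsilon> * q"

lemma pev_b2: "pev [(S2, False), (S2, False)] x = x - D x + D (- x)"
proof -
  have "D (- x + D x) = D (- x)" by (rule Dsh[OF D8[of x]]) simp
  then show ?thesis by (simp add: act_def)
qed

lemma cg_b2: "cg (pev [(S2, False), (S2, False)] x) (s * x)"
proof -
  have "4 dvd (de ((- x) mod 8) - de (x mod 8) - \<epsilon> * x)"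
    by (rule four_dvd_eps_mod) (rule fin_b2)
  then have "M dvd q * (de ((- x) mod 8) - de (x mod 8) - \<epsilon> * x)" by (rule cg_qdvd)
  moreover have "x - D x + D (- x) - s * x = q * (de ((- x) mod 8) - de (x mod 8) - \<epsilon> * x)"
    by (simp add: D_def algebra_simps)
  ultimately show ?thesis by (simp only: pev_b2 cg_def)
qed

lemma pev_rep_b2: "cg (pev (replicate (2 * m) (S2, False)) x) (s ^ m * x)"
proof (induction m arbitrary: x)
  case 0 then show ?case by simp
next
  case (Suc m)
  have r: "replicate (2 * Suc m) (S2, False) = [(S2, False), (S2, False)] @ replicate (2 * m) (S2, False)"
    by (simp add: replicate_add[symmetric])
  have "cg (pev (replicate (2 * Suc m) (S2, False)) x) (s ^ m * pev [(S2, False), (S2, False)] x)"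
    using Suc[of "pev [(S2, False), (S2, False)] x"] by (simp only: r pev_append)
  moreover have "cg (s ^ m * pev [(S2, False), (S2, False)] x) (s ^ m * (s * x))"
    by (rule cg_mult[OF cg_b2])
  ultimately show ?case by (auto intro: cg_trans simp: ac_simps)
qed

lemma s4: "M dvd s ^ 4 - 1"
proof -
  obtain t where t: "q = 8 * t" using q8 by (auto elim: dvdE)
  have "s ^ 4 - 1 = M * (\<epsilon> + 12 * t + 64 * \<epsilon> * t * t + 128 * t * t * t)"
    using eps M_q t by (elim disjE) (simp_all add: power4_eq_xxxx algebra_simps)
  then show ?thesis by simp
qed

lemma wpow_pos: "0 \<le> k \<Longrightarrow> wpow g k = replicate (nat k) (g, False)" by (simp add: wpow_def)

lemma pev_rep_a: "pev (replicate m (S1, False)) x = x + int m * D x"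
proof (induction m arbitrary: x)
  case 0 then show ?case by simp
next
  case (Suc m)
  have d1: "D (x + D x) = D x" by (rule D_shift)
  have "D (x + int m * D x) = D x" by (rule Dsh[of "int m * D x"]) (simp_all add: D8)
  then show ?case using Suc d1 by (simp add: replicate_Suc act_def algebra_simps)
qed

lemma pev_rep_c: "pev (replicate m (S3, bb)) x = (if bb then x - int m else x + int m)"
  by (induction m arbitrary: x) (auto simp: act_def)

lemma pev_wpow_c: "pev (wpow S3 z) x = x + z"
  by (auto simp: wpow_def pev_rep_c)


lemma wpow1: "wpow g 1 = [(g, False)]" by (simp add: wpow_def)
lemma wpow2: "wpow g 2 = [(g, False), (g, False)]" by (simp add: wpow_def numeral_2_eq_2)

lemma actA: "act (S1, False) x = x + D x" by (simp add: act_def)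
lemma actB: "act (S2, False) x = - x + D x" by (simp add: act_def)
lemma actC: "act (S3, False) x = x + 1" by (simp add: act_def)

lemma relA4: "cg (pev (wpow S1 4) x) x"
proof -
  have "pev (wpow S1 4) x = x + 4 * D x" by (simp add: wpow_pos pev_rep_a)
  moreover have "M dvd 4 * D x" using M_q by (simp add: D_def)
  ultimately show ?thesis by (simp add: cg_def)
qed

lemma relB8: "cg (pev (wpow S2 8) x) x"
proof -
  have "wpow S2 8 = replicate (2 * 4) (S2, False)" by (simp add: wpow_pos)
  then have "cg (pev (wpow S2 8) x) (s ^ 4 * x)" using pev_rep_b2[of 4 x] by simp
  moreover have "cg (s ^ 4 * x) x"
  proof -
    have "M dvd (s ^ 4 - 1) * x" using s4 by simp
    then show ?thesis by (simp add: cg_def algebra_simps)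
  qed
  ultimately show ?thesis by (rule cg_trans)
qed

lemma relCn: "cg (pev (wpow S3 (2 ^ \<beta>)) x) x"
  by (simp add: pev_wpow_c cg_def)

lemma relAB: "pev (wpow S1 1 @ wpow S2 1 @ wpow S1 1 @ wpow S2 1) x = x"
proof -
  have e1: "act (S2, False) (act (S1, False) y) = - y" for y
    by (simp add: actA actB D_shift)
  show ?thesis by (simp add: wpow1 e1 del: pev_Cons) (simp add: e1)
qed

lemma relABC: "pev (wpow S1 1 @ wpow S2 1 @ wpow S3 1 @ wpow S1 1 @ wpow S2 1 @ wpow S3 1) x = x"
proof -
  have e1: "act (S2, False) (act (S1, False) y) = - y" for y
    by (simp add: actA actB D_shift)
  show ?thesis by (simp add: wpow1 e1 actC)
qed

lemma relBC: "cg (pev (wpow S2 1 @ wpow S3 1 @ wpow S2 1 @ wpow S3 1) x) x"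
proof -
  have "pev (wpow S2 1 @ wpow S3 1 @ wpow S2 1 @ wpow S3 1) x = - (- x + D x + 1) + D (- x + D x + 1) + 1"
    by (simp add: wpow1 actB actC)
  also have "D (- x + D x + 1) = D (1 - x)" by (rule Dsh[OF D8[of x]]) simp
  finally have e: "pev (wpow S2 1 @ wpow S3 1 @ wpow S2 1 @ wpow S3 1) x = x + q * (de ((1 - x) mod 8) - de (x mod 8))"
    by (simp add: D_def algebra_simps)
  show ?thesis unfolding e cg_def using cg_qdvd[OF fin_bc[of x]] by simp
qed

lemma relB2A: "pev (wpow S2 2 @ wpow S1 1) x = pev (wpow S1 1 @ wpow S2 2) x"
proof -
  have l: "pev (wpow S2 2 @ wpow S1 1) x = (x - D x + D (- x)) + D (x - D x + D (- x))"
    using pev_b2[of x] by (simp add: wpow1 wpow2 actA del: pev_Cons) (simp add: act_def)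
  have "D (x - D x + D (- x)) = D x" by (rule Dsh[of "D (- x) - D x"]) (simp_all add: D8)
  then have l': "pev (wpow S2 2 @ wpow S1 1) x = x + D (- x)" using l by simp
  have r0: "pev (wpow S1 1 @ wpow S2 2) x = pev [(S2, False), (S2, False)] (x + D x)"
    by (simp only: wpow1 wpow2 append_Cons append_Nil pev_Cons actA)
  have r: "pev (wpow S1 1 @ wpow S2 2) x = (x + D x) - D (x + D x) + D (- (x + D x))"
    by (simp only: r0 pev_b2)
  have "D (- (x + D x)) = D (- x)" by (rule Dsh[of "- D x"]) (simp_all add: D8)
  then have r': "pev (wpow S1 1 @ wpow S2 2) x = x + D (- x)" using r by (simp add: D_shift)
  show ?thesis using l' r' by simp
qed

lemma relCB2: "cg (pev (wpow S3 1 @ wpow S2 2) x) (pev (wpow S2 2 @ wpow S3 (1 + \<epsilon> * 2 ^ (\<beta> - 2))) x)"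
proof -
  have l0: "pev (wpow S3 1 @ wpow S2 2) x = pev [(S2, False), (S2, False)] (x + 1)"
    by (simp only: wpow1 wpow2 append_Cons append_Nil pev_Cons actC)
  have l: "pev (wpow S3 1 @ wpow S2 2) x = (x + 1) - D (x + 1) + D (- (x + 1))"
    by (simp only: l0 pev_b2)
  have r: "pev (wpow S2 2 @ wpow S3 (1 + \<epsilon> * 2 ^ (\<beta> - 2))) x = x - D x + D (- x) + (1 + \<epsilon> * q)"
    by (simp only: wpow2 pev_append pev_wpow_c pev_b2)
  have e: "(x + 1) - D (x + 1) + D (- (x + 1)) - (x - D x + D (- x) + (1 + \<epsilon> * q)) =
     q * (de ((- 1 - x) mod 8) - de ((x + 1) mod 8) - (de ((- x) mod 8) - de (x mod 8)) - \<epsilon>)"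
    by (simp add: D_def algebra_simps)
  show ?thesis unfolding cg_def l r e using cg_qdvd[OF fin_c8[of x]] by simp
qed

lemma model_rel: "(l, r) \<in> Lambda2_rels \<beta> \<epsilon> \<Longrightarrow> cg (pev l x) (pev r x)"
  unfolding Lambda2_rels_def
  using relA4 relB8 relCn relAB relABC relBC relB2A relCB2
  by (auto simp: cg_sym)

lemma model_eqv: "word_eqv (Lambda2_rels \<beta> \<epsilon>) u v \<Longrightarrow> cg (pev u x) (pev v x)"
proof (induction arbitrary: x rule: word_eqv.induct)
  case (refl w) then show ?case by simp
next
  case (sym u v) then show ?case by (simp add: cg_sym)
next
  case (trans u v w) then show ?case by (meson cg_trans)
next
  case (cancel u g bb v)
  have "act (g, \<not> bb) (act (g, bb) (pev u x)) = pev u x" by (rule act_cancel)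
  then show ?case by simp
next
  case (rel l r u v)
  then show ?case by (simp add: pev_cong model_rel)
qed


definition nfw :: "nat \<Rightarrow> nat \<Rightarrow> nat \<Rightarrow> (gen3 \<times> bool) list" where
  "nfw i j k = replicate i (S1, False) @ replicate j (S2, False) @ replicate k (S3, False)"

abbreviation bpow :: "nat \<Rightarrow> int \<Rightarrow> int" where
  "bpow j y \<equiv> pev (replicate j (S2, False)) y"

lemma pev_nfw: "pev (nfw i j k) x = bpow j (x + int i * D x) + int k"
  by (simp add: nfw_def pev_rep_a pev_rep_c del: pev_Cons)

lemma bpow0: "bpow j 0 = 0"
proof (induction j)
  case 0 then show ?case by simp
next
  case (Suc j) then show ?case by (simp add: actB D0)
qed

lemma cg_small: "0 \<le> x \<Longrightarrow> x < M \<Longrightarrow> 0 \<le> y \<Longrightarrow> y < M \<Longrightarrow> cg x y \<Longrightarrow> x = y"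
  unfolding cg_def by (metis mod_eq_dvd_iff mod_pos_pos_trivial)

lemma cg_cancel4:
  fixes a b :: nat
  assumes h: "cg (int a * e * q + c) (int b * e * q + c)" and ab: "a < 4" "b < 4" and e: "e = 1 \<or> e = -1"
  shows "a = b"
proof -
  have "M dvd q * ((int a - int b) * e)" using h by (simp add: cg_def algebra_simps)
  then have "q * 4 dvd q * ((int a - int b) * e)" using M_q by (simp add: mult.commute)
  then have d: "4 dvd (int a - int b) * e" using q_pos by (simp add: dvd_times_left_cancel_iff)
  have "4 dvd (int a - int b)"
  proof (cases "e = 1")
    case True then show ?thesis using d by simp
  next
    case False
    then have "e = -1" using e by simp
    then have "4 dvd - (int a - int b)" using d by simp
    then show ?thesis by (simp only: dvd_minus_iff)
  qed
  then show ?thesis using ab by presburger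
qed

lemma mod8_add: "8 dvd z \<Longrightarrow> (z + c) mod 8 = c mod (8::int)"
  by (auto elim!: dvdE)

lemma q8m: "8 dvd int m * e * q" using q8 by simp

lemma spow: "cg (s ^ m) (1 + int m * \<epsilon> * q)"
proof (induction m)
  case 0 then show ?case by simp
next
  case (Suc m)
  have "cg (s ^ Suc m) (s * (1 + int m * \<epsilon> * q))" using cg_mult[OF Suc, of s] by simp
  moreover have "cg (s * (1 + int m * \<epsilon> * q)) (1 + int (Suc m) * \<epsilon> * q)"
  proof -
    obtain t' where t': "q = 8 * t'" using q8 by (auto elim: dvdE)
    define t where "t = 2 * t'"
    have t: "q = 4 * t" using t' by (simp add: t_def)
    have ee: "\<epsilon> * \<epsilon> = 1" using eps by auto
    have "s * (1 + int m * \<epsilon> * q) - (1 + int (Suc m) * \<epsilon> * q) = int m * (\<epsilon> * \<epsilon>) * q * q"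
      by (simp add: algebra_simps)
    also have "\<dots> = M * (int m * t)" using ee t M_q by (simp add: algebra_simps)
    finally show ?thesis by (simp add: cg_def)
  qed
  ultimately show ?case by (rule cg_trans)
qed

lemma bpow_add: "bpow (j + j') y = bpow j' (bpow j y)"
  by (simp add: replicate_add del: pev_Cons)

lemma bpow8: "cg (bpow 8 y) y"
  using relB8[of y] by (simp add: wpow_pos)

lemma bpow_inj: "j \<le> 8 \<Longrightarrow> cg (bpow j y) (bpow j y') \<Longrightarrow> cg y y'"
proof -
  assume j: "j \<le> 8" and h: "cg (bpow j y) (bpow j y')"
  have "cg (bpow (8 - j) (bpow j y)) (bpow (8 - j) (bpow j y'))" by (rule pev_cong[OF h])
  then have "cg (bpow 8 y) (bpow 8 y')" using bpow_add[of j "8 - j"] j by simp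
  then show ?thesis using bpow8 by (meson cg_sym cg_trans)
qed

lemma bpow_1: "cg (bpow j 1) (if even j then s ^ (j div 2) else - (s ^ (j div 2)))"
proof (cases "even j")
  case True
  then obtain m where j: "j = 2 * m" by blast
  show ?thesis using pev_rep_b2[of m 1] j by simp
next
  case False
  then obtain m where j: "j = Suc (2 * m)" by (metis oddE Suc_eq_plus1)
  have "bpow j 1 = bpow (2 * m) (-1)" by (simp add: j actB D1)
  then show ?thesis using pev_rep_b2[of m "-1"] j False by simp
qed

lemma model_inj:
  assumes ij: "i < 4" "i' < 4" "j < 8" "j' < 8" "k < 2 ^ \<beta>" "k' < 2 ^ \<beta>"
    and h: "\<And>x. cg (pev (nfw i j k) x) (pev (nfw i' j' k') x)"
  shows "i = i' \<and> j = j' \<and> k = k'"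
proof -
  have k: "k = k'"
  proof -
    have "cg (int k) (int k')" using h[of 0] by (simp add: pev_nfw D0 bpow0)
    moreover have "int k < M" "int k' < M" using ij by (simp_all add: of_nat_less_iff[symmetric])
    ultimately show ?thesis using cg_small[of "int k" "int k'"] by simp
  qed
  have h2: "cg (bpow j (x + int i * D x)) (bpow j' (x + int i' * D x))" for x
  proof -
    have "cg (bpow j (x + int i * D x) + int k + (- int k)) (bpow j' (x + int i' * D x) + int k + (- int k))"
      using cg_add[OF h[of x, unfolded pev_nfw k]] k by blast
    then show ?thesis by simp
  qed
  have j: "j = j'"
  proof -
    define m m' where "m = j div 2" and "m' = j' div 2"
    define vb where "vb jj = (if even jj then int (jj div 2) * \<epsilon> * q + 1 else int (jj div 2) * (- \<epsilon>) * q + (- 1))" for jj :: nat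
    have bv: "cg (bpow jj 1) (vb jj)" for jj
    proof -
      have sp: "cg (s ^ (jj div 2)) (int (jj div 2) * \<epsilon> * q + 1)"
        using spow[of "jj div 2"] by (simp add: ac_simps)
      have spn: "cg (- (s ^ (jj div 2))) (int (jj div 2) * (- \<epsilon>) * q + (- 1))"
        using cg_mult[OF sp, of "-1"] by (simp add: algebra_simps)
      show ?thesis
      proof (cases "even jj")
        case True
        then have "cg (bpow jj 1) (s ^ (jj div 2))" using bpow_1[of jj] by simp
        then show ?thesis using cg_trans[OF _ sp] True by (simp add: vb_def)
      next
        case False
        then have "cg (bpow jj 1) (- (s ^ (jj div 2)))" using bpow_1[of jj] by simp
        then show ?thesis using cg_trans[OF _ spn] False by (simp add: vb_def)
      qed
    qed
    have c1: "cg (vb j) (vb j')"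
      using cg_trans[OF cg_trans[OF cg_sym[OF bv[of j]] h2[of 1, simplified D1, simplified]] bv[of j']] .
    have v8: "vb jj mod 8 = (if even jj then 1 else 7)" for jj
    proof (cases "even jj")
      case True then show ?thesis
        unfolding vb_def using mod8_add[OF q8m[of "jj div 2" \<epsilon>], of 1] by simp
    next
      case False then show ?thesis
        unfolding vb_def using mod8_add[OF q8m[of "jj div 2" "- \<epsilon>"], of "-1"] by simp
    qed
    have par: "even j = even j'"
      using cg_mod8[OF c1] v8[of j] v8[of j'] by (auto split: if_splits)
    have mm: "m < 4" "m' < 4" using ij by (simp_all add: m_def m'_def)
    have "m = m'"
    proof (cases "even j")
      case True
      then have "cg (int m * \<epsilon> * q + 1) (int m' * \<epsilon> * q + 1)"
        using c1 par by (simp add: vb_def m_def m'_def)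
      then show ?thesis using cg_cancel4 mm eps by blast
    next
      case False
      then have "cg (int m * (- \<epsilon>) * q + (- 1)) (int m' * (- \<epsilon>) * q + (- 1))"
        using c1 par by (simp add: vb_def m_def m'_def)
      moreover have "- \<epsilon> = 1 \<or> - \<epsilon> = -1" using eps by auto
      ultimately show ?thesis using cg_cancel4 mm by blast
    qed
    then show ?thesis using par by (simp add: m_def m'_def) (metis dvd_mult_div_cancel odd_two_times_div_two_succ)
  qed
  have i: "i = i'"
  proof -
    have "cg (bpow j (2 + int i * D 2)) (bpow j (2 + int i' * D 2))" using h2[of 2] j by simp
    moreover have "j \<le> 8" using ij by simp
    ultimately have "cg (2 + int i * D 2) (2 + int i' * D 2)" using bpow_inj by blast
    then have "cg (int i * \<epsilon> * q + 2) (int i' * \<epsilon> * q + 2)" by (simp add: D2 ac_simps)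
    then show ?thesis using cg_cancel4 ij eps by blast
  qed
  show ?thesis using i j k by simp
qed

end

lemma (in group) int_pow_numeral: "x [^] (numeral k :: int) = x [^] (numeral k :: nat)"
  using int_pow_int[of G x "numeral k"] by simp

lemma (in group) int_pow2: "x \<in> carrier G \<Longrightarrow> x [^] (2 :: int) = x \<otimes> x"
  by (simp add: int_pow_numeral numeral_2_eq_2)

lemma (in group) neg_exp:
  assumes x: "x \<in> carrier G" and m: "x [^] (16 * w) = \<one>"
  shows "x [^] (1 - 4 * int w) = x [^] (1 + 4 * w * 3)"
proof -
  have e: "1 - 4 * int w = int (1 + 4 * w * 3) + - int (16 * w)" by simp
  have "x [^] (1 - 4 * int w) = x [^] int (1 + 4 * w * 3) \<otimes> x [^] (- int (16 * w))"
    by (simp only: e int_pow_mult[OF x])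
  also have "x [^] (- int (16 * w)) = \<one>" using int_pow_neg_int[OF x, of "16 * w"] m by simp
  also have "x [^] int (1 + 4 * w * 3) = x [^] (1 + 4 * w * 3)" by (rule int_pow_int)
  finally show ?thesis using x by simp
qed

lemma two_pow_w: "5 \<le> \<beta> \<Longrightarrow> (2::nat) ^ \<beta> = 16 * 2 ^ (\<beta> - 4)"
proof -
  assume beta: "5 \<le> \<beta>"
  have e: "\<beta> - 4 + 4 = \<beta>" using beta by simp
  have "(2::nat) ^ \<beta> = 2 ^ (\<beta> - 4 + 4)" by (simp only: e)
  also have "\<dots> = 2 ^ (\<beta> - 4) * 2 ^ 4" by (rule power_add)
  finally show ?thesis by simp
qed

lemma two_pow_q: "5 \<le> \<beta> \<Longrightarrow> (2::int) ^ (\<beta> - 2) = 4 * int (2 ^ (\<beta> - 4))"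
proof -
  assume beta: "5 \<le> \<beta>"
  have e: "\<beta> - 4 + 2 = \<beta> - 2" using beta by simp
  have "(2::int) ^ (\<beta> - 2) = 2 ^ (\<beta> - 4 + 2)" by (simp only: e)
  also have "\<dots> = 2 ^ (\<beta> - 4) * 2 ^ 2" by (rule power_add)
  finally show ?thesis by simp
qed


context
  fixes \<beta> :: nat and \<epsilon> :: int and H :: "('b, 'c) monoid_scheme" and f :: "gen3 \<Rightarrow> 'b"
  assumes beta: "5 \<le> \<beta>" and eps: "\<epsilon> \<in> {1, -1}" and H: "group H" and f: "\<And>g. f g \<in> carrier H"
begin

interpretation H: group H by (rule H)

lemma evw_wpow': "evw H f (wpow g k) = f g [^]\<^bsub>H\<^esub> k"
  by (rule evw_wpow[where H=H and f=f, OF H f])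

lemma evw_w1: "evw H f (wpow g 1) = f g"
  using evw_wpow'[where g=g and k=1] f by simp

lemma evw_w2: "evw H f (wpow g 2) = f g \<otimes>\<^bsub>H\<^esub> f g"
  using evw_wpow'[where g=g and k=2] f by (simp add: H.int_pow2)

lemma evw_w4: "evw H f (wpow g 4) = f g [^]\<^bsub>H\<^esub> (4::nat)"
  using evw_wpow'[where g=g and k=4] by (simp add: H.int_pow_numeral)

lemma evw_w8: "evw H f (wpow g 8) = f g [^]\<^bsub>H\<^esub> (8::nat)"
  using evw_wpow'[where g=g and k=8] by (simp add: H.int_pow_numeral)

lemma evw_wn: "evw H f (wpow g (2 ^ \<beta>)) = f g [^]\<^bsub>H\<^esub> (16 * ((2::nat) ^ (\<beta> - 4)))"
proof -
  have e: "(2::int) ^ \<beta> = int (16 * ((2::nat) ^ (\<beta> - 4)))" using two_pow_w[OF beta] by (metis of_nat_numeral of_nat_power)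
  show ?thesis by (simp only: evw_wpow' e int_pow_int)
qed

lemmas ev_simps = evw_append[OF H f] evw_Nil[where H=H and f=f, OF H f] evw_w1 evw_w2 evw_w4 evw_w8 evw_wn

lemma rels_equiv:
  "(\<forall>(l, r) \<in> Lambda2_rels \<beta> \<epsilon>. evw H f l = evw H f r) \<longleftrightarrow>
     f S1 [^]\<^bsub>H\<^esub> (4::nat) = \<one>\<^bsub>H\<^esub> \<and> f S2 [^]\<^bsub>H\<^esub> (8::nat) = \<one>\<^bsub>H\<^esub> \<and> f S3 [^]\<^bsub>H\<^esub> (16 * ((2::nat) ^ (\<beta> - 4))) = \<one>\<^bsub>H\<^esub> \<and>
     f S1 \<otimes>\<^bsub>H\<^esub> f S2 \<otimes>\<^bsub>H\<^esub> f S1 \<otimes>\<^bsub>H\<^esub> f S2 = \<one>\<^bsub>H\<^esub> \<and>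
     f S2 \<otimes>\<^bsub>H\<^esub> f S3 \<otimes>\<^bsub>H\<^esub> f S2 \<otimes>\<^bsub>H\<^esub> f S3 = \<one>\<^bsub>H\<^esub> \<and>
     f S1 \<otimes>\<^bsub>H\<^esub> f S2 \<otimes>\<^bsub>H\<^esub> f S3 \<otimes>\<^bsub>H\<^esub> f S1 \<otimes>\<^bsub>H\<^esub> f S2 \<otimes>\<^bsub>H\<^esub> f S3 = \<one>\<^bsub>H\<^esub> \<and>
     f S2 \<otimes>\<^bsub>H\<^esub> f S2 \<otimes>\<^bsub>H\<^esub> f S1 = f S1 \<otimes>\<^bsub>H\<^esub> f S2 \<otimes>\<^bsub>H\<^esub> f S2 \<and>
     f S3 \<otimes>\<^bsub>H\<^esub> f S2 \<otimes>\<^bsub>H\<^esub> f S2 = f S2 \<otimes>\<^bsub>H\<^esub> f S2 \<otimes>\<^bsub>H\<^esub> f S3 [^]\<^bsub>H\<^esub> (1 + 4 * ((2::nat) ^ (\<beta> - 4)) * (if \<epsilon> = 1 then 1 else 3 :: nat))"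
proof -
  have zc: "f S3 \<in> carrier H" by (rule f)
  have last: "f S3 [^]\<^bsub>H\<^esub> (16 * ((2::nat) ^ (\<beta> - 4))) = \<one>\<^bsub>H\<^esub> \<Longrightarrow>
      evw H f (wpow S3 (1 + \<epsilon> * 2 ^ (\<beta> - 2))) = f S3 [^]\<^bsub>H\<^esub> (1 + 4 * ((2::nat) ^ (\<beta> - 4)) * (if \<epsilon> = 1 then 1 else 3 :: nat))"
  proof -
    assume m: "f S3 [^]\<^bsub>H\<^esub> (16 * ((2::nat) ^ (\<beta> - 4))) = \<one>\<^bsub>H\<^esub>"
    have ev: "evw H f (wpow S3 (1 + \<epsilon> * 2 ^ (\<beta> - 2))) = f S3 [^]\<^bsub>H\<^esub> (1 + \<epsilon> * (4 * int ((2::nat) ^ (\<beta> - 4))))"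
      using evw_wpow'[where g=S3 and k="1 + \<epsilon> * 2 ^ (\<beta> - 2)"] two_pow_q[OF beta] by simp
    show ?thesis
    proof (cases "\<epsilon> = 1")
      case True
      have e1: "1 + \<epsilon> * (4 * int ((2::nat) ^ (\<beta> - 4))) = int (1 + 4 * ((2::nat) ^ (\<beta> - 4)) * (if \<epsilon> = 1 then 1 else 3 :: nat))"
        using True by simp
      show ?thesis by (simp only: ev e1 int_pow_int)
    next
      case False
      then have e: "\<epsilon> = -1" using eps by simp
      have e1: "1 + \<epsilon> * (4 * int ((2::nat) ^ (\<beta> - 4))) = 1 - 4 * int ((2::nat) ^ (\<beta> - 4))" using e by simp
      have e2: "(if \<epsilon> = 1 then 1 else 3 :: nat) = 3" using False by simp
      show ?thesis by (simp only: ev e1 e2 H.neg_exp[OF zc m])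
    qed
  qed
  have fc: "f S1 \<in> carrier H" "f S2 \<in> carrier H" "f S3 \<in> carrier H" by (simp_all add: f)
  show ?thesis
  proof
    assume h: "\<forall>(l, r) \<in> Lambda2_rels \<beta> \<epsilon>. evw H f l = evw H f r"
    have hr: "(l, r) \<in> Lambda2_rels \<beta> \<epsilon> \<Longrightarrow> evw H f l = evw H f r" for l r using h by blast
    have r3: "f S3 [^]\<^bsub>H\<^esub> (16 * ((2::nat) ^ (\<beta> - 4))) = \<one>\<^bsub>H\<^esub>"
      using hr[of "wpow S3 (2 ^ \<beta>)" "[]"] by (simp add: Lambda2_rels_def ev_simps)
    show "f S1 [^]\<^bsub>H\<^esub> (4::nat) = \<one>\<^bsub>H\<^esub> \<and> f S2 [^]\<^bsub>H\<^esub> (8::nat) = \<one>\<^bsub>H\<^esub> \<and> f S3 [^]\<^bsub>H\<^esub> (16 * ((2::nat) ^ (\<beta> - 4))) = \<one>\<^bsub>H\<^esub> \<and>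
     f S1 \<otimes>\<^bsub>H\<^esub> f S2 \<otimes>\<^bsub>H\<^esub> f S1 \<otimes>\<^bsub>H\<^esub> f S2 = \<one>\<^bsub>H\<^esub> \<and>
     f S2 \<otimes>\<^bsub>H\<^esub> f S3 \<otimes>\<^bsub>H\<^esub> f S2 \<otimes>\<^bsub>H\<^esub> f S3 = \<one>\<^bsub>H\<^esub> \<and>
     f S1 \<otimes>\<^bsub>H\<^esub> f S2 \<otimes>\<^bsub>H\<^esub> f S3 \<otimes>\<^bsub>H\<^esub> f S1 \<otimes>\<^bsub>H\<^esub> f S2 \<otimes>\<^bsub>H\<^esub> f S3 = \<one>\<^bsub>H\<^esub> \<and>
     f S2 \<otimes>\<^bsub>H\<^esub> f S2 \<otimes>\<^bsub>H\<^esub> f S1 = f S1 \<otimes>\<^bsub>H\<^esub> f S2 \<otimes>\<^bsub>H\<^esub> f S2 \<and>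
     f S3 \<otimes>\<^bsub>H\<^esub> f S2 \<otimes>\<^bsub>H\<^esub> f S2 = f S2 \<otimes>\<^bsub>H\<^esub> f S2 \<otimes>\<^bsub>H\<^esub> f S3 [^]\<^bsub>H\<^esub> (1 + 4 * ((2::nat) ^ (\<beta> - 4)) * (if \<epsilon> = 1 then 1 else 3 :: nat))"
      using hr[of "wpow S1 4" "[]"] hr[of "wpow S2 8" "[]"] r3
        hr[of "wpow S1 1 @ wpow S2 1 @ wpow S1 1 @ wpow S2 1" "[]"]
        hr[of "wpow S2 1 @ wpow S3 1 @ wpow S2 1 @ wpow S3 1" "[]"]
        hr[of "wpow S1 1 @ wpow S2 1 @ wpow S3 1 @ wpow S1 1 @ wpow S2 1 @ wpow S3 1" "[]"]
        hr[of "wpow S2 2 @ wpow S1 1" "wpow S1 1 @ wpow S2 2"]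
        hr[of "wpow S3 1 @ wpow S2 2" "wpow S2 2 @ wpow S3 (1 + \<epsilon> * 2 ^ (\<beta> - 2))"]
        last[OF r3] fc
      by (simp add: Lambda2_rels_def ev_simps H.m_assoc)
  next
    assume h: "f S1 [^]\<^bsub>H\<^esub> (4::nat) = \<one>\<^bsub>H\<^esub> \<and> f S2 [^]\<^bsub>H\<^esub> (8::nat) = \<one>\<^bsub>H\<^esub> \<and> f S3 [^]\<^bsub>H\<^esub> (16 * ((2::nat) ^ (\<beta> - 4))) = \<one>\<^bsub>H\<^esub> \<and>
     f S1 \<otimes>\<^bsub>H\<^esub> f S2 \<otimes>\<^bsub>H\<^esub> f S1 \<otimes>\<^bsub>H\<^esub> f S2 = \<one>\<^bsub>H\<^esub> \<and>
     f S2 \<otimes>\<^bsub>H\<^esub> f S3 \<otimes>\<^bsub>H\<^esub> f S2 \<otimes>\<^bsub>H\<^esub> f S3 = \<one>\<^bsub>H\<^esub> \<and>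
     f S1 \<otimes>\<^bsub>H\<^esub> f S2 \<otimes>\<^bsub>H\<^esub> f S3 \<otimes>\<^bsub>H\<^esub> f S1 \<otimes>\<^bsub>H\<^esub> f S2 \<otimes>\<^bsub>H\<^esub> f S3 = \<one>\<^bsub>H\<^esub> \<and>
     f S2 \<otimes>\<^bsub>H\<^esub> f S2 \<otimes>\<^bsub>H\<^esub> f S1 = f S1 \<otimes>\<^bsub>H\<^esub> f S2 \<otimes>\<^bsub>H\<^esub> f S2 \<and>
     f S3 \<otimes>\<^bsub>H\<^esub> f S2 \<otimes>\<^bsub>H\<^esub> f S2 = f S2 \<otimes>\<^bsub>H\<^esub> f S2 \<otimes>\<^bsub>H\<^esub> f S3 [^]\<^bsub>H\<^esub> (1 + 4 * ((2::nat) ^ (\<beta> - 4)) * (if \<epsilon> = 1 then 1 else 3 :: nat))"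
    then have r3: "f S3 [^]\<^bsub>H\<^esub> (16 * ((2::nat) ^ (\<beta> - 4))) = \<one>\<^bsub>H\<^esub>" by blast
    show "\<forall>(l, r) \<in> Lambda2_rels \<beta> \<epsilon>. evw H f l = evw H f r"
      using h last[OF r3] fc by (simp add: Lambda2_rels_def ev_simps H.m_assoc)
  qed
qed

end
lemma evw_pres: "evw (pres_group R) (pres_gen R) w = word_class R w"
proof (induction w)
  case Nil
  show ?case using evw_Nil[where H="pres_group R" and f="pres_gen R", OF pres_group_is_group pres_gen_carrier]
    by (simp add: pres_one)
next
  case (Cons p w)
  obtain g bb where p: "p = (g, bb)" by (cases p)
  have "evw (pres_group R) (pres_gen R) (p # w) =
      (if bb then inv\<^bsub>pres_group R\<^esub> (pres_gen R g) else pres_gen R g) \<otimes>\<^bsub>pres_group R\<^esub> word_class R w"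
    using evw_Cons[where H="pres_group R" and f="pres_gen R", OF pres_group_is_group pres_gen_carrier] Cons
    by (simp add: p)
  also have "(if bb then inv\<^bsub>pres_group R\<^esub> (pres_gen R g) else pres_gen R g) = word_class R [(g, bb)]"
    by (cases bb) (simp_all add: pres_letter)
  finally show ?case by (simp add: p pres_mult)
qed

context
  fixes \<beta> :: nat and \<epsilon> :: int
  assumes beta: "5 \<le> \<beta>" and eps: "\<epsilon> \<in> {1, -1}"
begin

definition "RR = Lambda2_rels \<beta> \<epsilon>"
definition "GG = pres_group RR"
definition "aa = pres_gen RR S1"
definition "bb = pres_gen RR S2"
definition "cc = pres_gen RR S3"
definition "w0 = (2::nat) ^ (\<beta> - 4)"
definition "u0 = (if \<epsilon> = 1 then 1 else 3 :: nat)"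

lemma GG_group: "group GG" by (simp add: GG_def pres_group_is_group)

lemma GG_rels_all: "\<forall>(l, r) \<in> Lambda2_rels \<beta> \<epsilon>. evw GG (pres_gen RR) l = evw GG (pres_gen RR) r"
  by (auto simp: GG_def evw_pres RR_def pres_rel)

lemma GG_rels:
  "aa [^]\<^bsub>GG\<^esub> (4::nat) = \<one>\<^bsub>GG\<^esub> \<and> bb [^]\<^bsub>GG\<^esub> (8::nat) = \<one>\<^bsub>GG\<^esub> \<and> cc [^]\<^bsub>GG\<^esub> (16 * w0) = \<one>\<^bsub>GG\<^esub> \<and>
     aa \<otimes>\<^bsub>GG\<^esub> bb \<otimes>\<^bsub>GG\<^esub> aa \<otimes>\<^bsub>GG\<^esub> bb = \<one>\<^bsub>GG\<^esub> \<and>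
     bb \<otimes>\<^bsub>GG\<^esub> cc \<otimes>\<^bsub>GG\<^esub> bb \<otimes>\<^bsub>GG\<^esub> cc = \<one>\<^bsub>GG\<^esub> \<and>
     aa \<otimes>\<^bsub>GG\<^esub> bb \<otimes>\<^bsub>GG\<^esub> cc \<otimes>\<^bsub>GG\<^esub> aa \<otimes>\<^bsub>GG\<^esub> bb \<otimes>\<^bsub>GG\<^esub> cc = \<one>\<^bsub>GG\<^esub> \<and>
     bb \<otimes>\<^bsub>GG\<^esub> bb \<otimes>\<^bsub>GG\<^esub> aa = aa \<otimes>\<^bsub>GG\<^esub> bb \<otimes>\<^bsub>GG\<^esub> bb \<and>
     cc \<otimes>\<^bsub>GG\<^esub> bb \<otimes>\<^bsub>GG\<^esub> bb = bb \<otimes>\<^bsub>GG\<^esub> bb \<otimes>\<^bsub>GG\<^esub> cc [^]\<^bsub>GG\<^esub> (1 + 4 * w0 * u0)"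
  using rels_equiv[where f="pres_gen RR", OF beta eps GG_group] GG_rels_all
  by (simp add: GG_def pres_gen_carrier aa_def bb_def cc_def w0_def u0_def)

lemma GG_L2: "L2 GG aa bb cc w0 u0"
  unfolding L2_def L2_axioms_def
  using GG_group GG_rels by (simp add: aa_def bb_def cc_def GG_def pres_gen_carrier w0_def u0_def)

lemma GG_gen: "carrier GG \<subseteq> generate GG {aa, bb, cc}"
proof
  interpret group GG by (rule GG_group)
  fix x assume "x \<in> carrier GG"
  then obtain w where x: "x = word_class RR w" by (auto simp: GG_def pres_carrier)
  have "word_class RR w \<in> generate GG {aa, bb, cc}"
  proof (induction w)
    case Nil
    show ?case using generate.one[of GG "{aa, bb, cc}"] by (simp add: GG_def pres_one)
  next
    case (Cons p w)
    obtain g b where p: "p = (g, b)" by (cases p)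
    have "pres_gen RR g \<in> {aa, bb, cc}" by (cases g) (simp_all add: aa_def bb_def cc_def)
    then have "word_class RR [p] \<in> generate GG {aa, bb, cc}"
      using generate.incl[of _ "{aa, bb, cc}" GG] generate.inv[of _ "{aa, bb, cc}" GG]
      by (cases b) (auto simp: p pres_letter GG_def)
    moreover have "word_class RR (p # w) = word_class RR [p] \<otimes>\<^bsub>GG\<^esub> word_class RR w"
      unfolding GG_def by (rule pres_cons)
    ultimately show ?case using generate.eng Cons by fastforce
  qed
  then show "x \<in> generate GG {aa, bb, cc}" using x by simp
qed

lemma nfw_class: "word_class RR (mdl.nfw i j k) = aa [^]\<^bsub>GG\<^esub> i \<otimes>\<^bsub>GG\<^esub> bb [^]\<^bsub>GG\<^esub> j \<otimes>\<^bsub>GG\<^esub> cc [^]\<^bsub>GG\<^esub> k"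
proof -
  interpret group GG by (rule GG_group)
  interpret M: mdl \<beta> \<epsilon> using beta eps by unfold_locales auto
  have "word_class RR (mdl.nfw i j k) = word_class RR (replicate i (S1, False)) \<otimes>\<^bsub>GG\<^esub>
      (word_class RR (replicate j (S2, False)) \<otimes>\<^bsub>GG\<^esub> word_class RR (replicate k (S3, False)))"
    unfolding M.nfw_def GG_def by (simp only: pres_mult)
  also have "\<dots> = aa [^]\<^bsub>GG\<^esub> i \<otimes>\<^bsub>GG\<^esub> (bb [^]\<^bsub>GG\<^esub> j \<otimes>\<^bsub>GG\<^esub> cc [^]\<^bsub>GG\<^esub> k)"
    by (simp only: pres_replicate pres_letter aa_def bb_def cc_def GG_def)
  also have "\<dots> = aa [^]\<^bsub>GG\<^esub> i \<otimes>\<^bsub>GG\<^esub> bb [^]\<^bsub>GG\<^esub> j \<otimes>\<^bsub>GG\<^esub> cc [^]\<^bsub>GG\<^esub> k"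
  proof -
    have "aa \<in> carrier GG" "bb \<in> carrier GG" "cc \<in> carrier GG"
      by (simp_all add: aa_def bb_def cc_def GG_def pres_gen_carrier)
    then show ?thesis by (simp add: m_assoc)
  qed
  finally show ?thesis .
qed

lemma GG_inj: "i < 4 \<Longrightarrow> j < 8 \<Longrightarrow> k < 16 * w0 \<Longrightarrow> i' < 4 \<Longrightarrow> j' < 8 \<Longrightarrow> k' < 16 * w0 \<Longrightarrow>
     L2.nf GG aa bb cc i j k = L2.nf GG aa bb cc i' j' k' \<Longrightarrow> i = i' \<and> j = j' \<and> k = k'"
proof -
  assume ij: "i < 4" "j < 8" "k < 16 * w0" "i' < 4" "j' < 8" "k' < 16 * w0"
    and e: "L2.nf GG aa bb cc i j k = L2.nf GG aa bb cc i' j' k'"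
  interpret M: mdl \<beta> \<epsilon> using beta eps by unfold_locales auto
  have "word_class RR (mdl.nfw i j k) = word_class RR (mdl.nfw i' j' k')"
    using e by (simp add: nfw_class L2.nf_def[OF GG_L2])
  then have "word_eqv (Lambda2_rels \<beta> \<epsilon>) (mdl.nfw i j k) (mdl.nfw i' j' k')"
    by (simp add: word_class_eq_iff RR_def)
  then have "\<And>x. M.cg (M.pev (mdl.nfw i j k) x) (M.pev (mdl.nfw i' j' k') x)" by (rule M.model_eqv)
  moreover have "16 * w0 = 2 ^ \<beta>" using two_pow_w[OF beta] by (simp add: w0_def)
  ultimately show ?thesis using M.model_inj ij by (metis M.nfw_def mdl.nfw_def)
qed

lemma GG_L2i: "L2i GG aa bb cc w0 u0"
  unfolding L2i_def L2i_axioms_def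
  using GG_L2 GG_gen GG_inj by (auto simp: w0_def)

lemma GG_univ:
  fixes H :: "'x set monoid" and x y z
  assumes H: "group H" and xyz: "x \<in> carrier H" "y \<in> carrier H" "z \<in> carrier H"
    and rels: "x [^]\<^bsub>H\<^esub> (4::nat) = \<one>\<^bsub>H\<^esub>" "y [^]\<^bsub>H\<^esub> (8::nat) = \<one>\<^bsub>H\<^esub>" "z [^]\<^bsub>H\<^esub> (16 * w0) = \<one>\<^bsub>H\<^esub>"
      "x \<otimes>\<^bsub>H\<^esub> y \<otimes>\<^bsub>H\<^esub> x \<otimes>\<^bsub>H\<^esub> y = \<one>\<^bsub>H\<^esub>" "y \<otimes>\<^bsub>H\<^esub> z \<otimes>\<^bsub>H\<^esub> y \<otimes>\<^bsub>H\<^esub> z = \<one>\<^bsub>H\<^esub>"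
      "x \<otimes>\<^bsub>H\<^esub> y \<otimes>\<^bsub>H\<^esub> z \<otimes>\<^bsub>H\<^esub> x \<otimes>\<^bsub>H\<^esub> y \<otimes>\<^bsub>H\<^esub> z = \<one>\<^bsub>H\<^esub>"
      "y \<otimes>\<^bsub>H\<^esub> y \<otimes>\<^bsub>H\<^esub> x = x \<otimes>\<^bsub>H\<^esub> y \<otimes>\<^bsub>H\<^esub> y"
      "z \<otimes>\<^bsub>H\<^esub> y \<otimes>\<^bsub>H\<^esub> y = y \<otimes>\<^bsub>H\<^esub> y \<otimes>\<^bsub>H\<^esub> z [^]\<^bsub>H\<^esub> (1 + 4 * w0 * u0)"
  shows "\<exists>\<psi> \<in> hom GG H. \<psi> aa = x \<and> \<psi> bb = y \<and> \<psi> cc = z"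
proof -
  define f where "f g = (case g of S1 \<Rightarrow> x | S2 \<Rightarrow> y | S3 \<Rightarrow> z)" for g
  have fc: "f g \<in> carrier H" for g using xyz by (cases g) (simp_all add: f_def)
  have f123: "f S1 = x" "f S2 = y" "f S3 = z" by (simp_all add: f_def)
  have all: "\<forall>(l, r) \<in> Lambda2_rels \<beta> \<epsilon>. evw H f l = evw H f r"
    using rels_equiv[where f=f, OF beta eps H fc] rels by (simp add: f123 w0_def u0_def)
  have rl: "(l, r) \<in> RR \<Longrightarrow> evw H f l = evw H f r" for l r using all by (auto simp: RR_def)
  have hom: "pres_hom H f RR \<in> hom (pres_group RR) H"
    using pres_hom_hom[where H=H and f=f and R=RR, OF H fc rl] .
  have gens: "pres_hom H f RR (pres_gen RR g) = f g" for g
    using pres_hom_gen[where H=H and f=f and R=RR, OF H fc rl] .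
  show ?thesis
    by (rule bexI[of _ "pres_hom H f RR"]) (simp_all add: GG_def aa_def bb_def cc_def gens f123 hom)
qed

lemma main: "atomic_chiral4 GG aa bb cc \<and> group.ord GG aa = 4 \<and> group.ord GG bb = 8 \<and> group.ord GG cc = 2 ^ \<beta>"
proof -
  interpret L: L2i GG aa bb cc w0 u0 by (rule GG_L2i)
  have n: "16 * w0 = 2 ^ \<beta>" using two_pow_w[OF beta] by (simp add: w0_def)
  have tight: "tight_chiral4 GG aa bb cc"
    unfolding tight_chiral4_def chiral4_def
    using L.rot L.chiral L.finite_G L.order_G L.ord_a L.ord_b L.ord_c by simp
  have "\<not> (\<exists>N. N \<lhd> GG \<and> N \<noteq> {\<one>\<^bsub>GG\<^esub>} \<and> tight_chiral4 (GG Mod N) (N #>\<^bsub>GG\<^esub> aa) (N #>\<^bsub>GG\<^esub> bb) (N #>\<^bsub>GG\<^esub> cc))"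
  proof
    assume "\<exists>N. N \<lhd> GG \<and> N \<noteq> {\<one>\<^bsub>GG\<^esub>} \<and> tight_chiral4 (GG Mod N) (N #>\<^bsub>GG\<^esub> aa) (N #>\<^bsub>GG\<^esub> bb) (N #>\<^bsub>GG\<^esub> cc)"
    then obtain N where N: "N \<lhd> GG" "N \<noteq> {\<one>\<^bsub>GG\<^esub>}" "tight_chiral4 (GG Mod N) (N #>\<^bsub>GG\<^esub> aa) (N #>\<^bsub>GG\<^esub> bb) (N #>\<^bsub>GG\<^esub> cc)"
      by blast
    show False
      by (rule L.no_tight_quotient[OF GG_univ N]) (simp_all add: w0_def u0_def)
  qed
  then show ?thesis using tight L.ord_a L.ord_b L.ord_c n by (simp add: atomic_chiral4_def)
qed

lemma main2: "atomic_chiral4 (Lambda2 \<beta> \<epsilon>)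
           (pres_gen (Lambda2_rels \<beta> \<epsilon>) S1) (pres_gen (Lambda2_rels \<beta> \<epsilon>) S2)
           (pres_gen (Lambda2_rels \<beta> \<epsilon>) S3)
      \<and> group.ord (Lambda2 \<beta> \<epsilon>) (pres_gen (Lambda2_rels \<beta> \<epsilon>) S1) = 4
      \<and> group.ord (Lambda2 \<beta> \<epsilon>) (pres_gen (Lambda2_rels \<beta> \<epsilon>) S2) = 8
      \<and> group.ord (Lambda2 \<beta> \<epsilon>) (pres_gen (Lambda2_rels \<beta> \<epsilon>) S3) = 2 ^ \<beta>"
  using main unfolding GG_def RR_def aa_def bb_def cc_def Lambda2_def .

end

theorem theorem5p8:
  fixes \<beta> :: nat and \<epsilon> :: int
  assumes "\<beta> \<ge> 5" and "\<epsilon> \<in> {1, -1}"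
  shows "atomic_chiral4 (Lambda2 \<beta> \<epsilon>)
           (pres_gen (Lambda2_rels \<beta> \<epsilon>) S1) (pres_gen (Lambda2_rels \<beta> \<epsilon>) S2)
           (pres_gen (Lambda2_rels \<beta> \<epsilon>) S3)
      \<and> group.ord (Lambda2 \<beta> \<epsilon>) (pres_gen (Lambda2_rels \<beta> \<epsilon>) S1) = 4
      \<and> group.ord (Lambda2 \<beta> \<epsilon>) (pres_gen (Lambda2_rels \<beta> \<epsilon>) S2) = 8
      \<and> group.ord (Lambda2 \<beta> \<epsilon>) (pres_gen (Lambda2_rels \<beta> \<epsilon>) S3) = 2 ^ \<beta>"
  by (rule main2[OF assms])
end
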